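(* In the structured linear setting described in the context, suppose the equal allocation sampling strategy is used, Assumptions A and B hold, $\delta>0$, and $\mathcal A(\mathbf{x})=\mathcal A$ for all $\mathbf{x}\in\mathcal X$, with $k=|\mathcal A|$. Let $T_{\mathrm I}=\mathbb E[\tau^{\mathrm I,L}_{\alpha,\delta}]$ and $T_{\mathrm{II}}=\mathbb E[\tau^{\mathrm{II},L}_{\alpha,\delta}]$. Then, as $k\to\infty$, $T_{\mathrm I}=\mathcal O(k\log k)$ and $T_{\mathrm{II}}=\mathcal O(k\log k)$; and as $\alpha\to0$, $T_{\mathrm I}=\mathcal O(\log(1/\alpha))$ and $T_{\mathrm{II}}=\mathcal O(\log(1/\alpha))$.
   Context: Linear setting: finite action set $\mathcal A$ ($k$ actions), finite context set $\mathcal X\subset\mathbb R^d$ with $m$ contexts and known probabilities $p(\mathbf{x})>0$; known feature map $\mathbf f:\mathcal X\to\mathbb R^d$; mean performance $y(\mathbf{x},a)=\mathbf f(\mathbf{x})^{\mathrm T}\bm\beta(a)$ with unknown $\bm\beta(a)\in\mathbb R^d$; observations $Y_t=\mathbf f(\mathbf{X}_t)^{\mathrm T}\bm\beta(A_t)+\varepsilon_t$ with independent noises, conditionally $\mathcal N(0,\sigma^2(A_t))$, unknown $\sigma^2(a)>0$. Statistics: $N_t(a)$ samples of action $a$ up to $t$; $D_t(a)=\sum_{s\le t,A_s=a}\mathbf f(\mathbf{X}_s)\mathbf f(\mathbf{X}_s)^{\mathrm T}$; OLS $\hat{\bm\beta}_t(a)$; residual variance $S_t^2(a)=\frac1{N_t(a)-d}\sum_{s\le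 t,A_s=a}(Y_s-\mathbf f(\mathbf{X}_s)^{\mathrm T}\hat{\bm\beta}_t(a))^2$; $\Sigma_t(\mathbf{x},a)=\mathbf f(\mathbf{x})^{\mathrm T}D_t(a)^{-1}\mathbf f(\mathbf{x})$; $\hat\pi_t(\mathbf{x})\in\arg\max_a\mathbf f(\mathbf{x})^{\mathrm T}\hat{\bm\beta}_t(a)$; $t_0=\inf\{t:D_t(a)\succ0\ \forall a\}$; $\tilde Z^L_{a,a'}(\mathbf{x},t,\delta)=\frac{(\mathbf f(\mathbf{x})^{\mathrm T}\hat{\bm\beta}_t(a)-\mathbf f(\mathbf{x})^{\mathrm T}\hat{\bm\beta}_t(a')+\delta)^2}{2(S_t^2(a)\Sigma_t(\mathbf{x},a)+S_t^2(a')\Sigma_t(\mathbf{x},a'))}$. For fixed $\epsilon>0$, $\gamma^L(t_1,t_2,\alpha)=\frac{(t_1-d)t_2}{\max\{(\frac{\alpha^2}{t_2+1})^{1/(t_1-d+1)}(t_2+1)-1,\epsilon\}}-(t_1-d)$. For $r\in\{\mathrm I,\mathrm{II}\}$, $\alpha^{\mathrm I}(\mathbf{x})=\frac{\alpha}{(k-1)mp(\mathbf{x})}$, $\alpha^{\mathrm{II}}(\mathbf{x})=\frac{\alpha}{(k-1)m}$ and $\varphi^{r,L}_{a,a'}(\bm N_t,\alpha,\mathbf{x})=\max\{\frac12\gamma^L(N_t(a),\Sigma_t^{-1}(\mathbf{x},a),\alpha^{r}(\mathbf{x})(\Sigma_t^{-1}(\mathbf{x},a')+1)^{-1/2}),\frac12\gamma^L(N_t(a'),\Sigma_t^{-1}(\mathbf{x},a'),\alpha^{r}(\mathbf{x})(\Sigma_t^{-1}(\mathbf{x},a)+1)^{-1/2})\}$.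 Stopping rules: $\tau^{\mathrm I,L}_{\alpha,\delta}=\inf\{t\ge t_0:\forall\mathbf{x},\forall a\ne\hat\pi_t(\mathbf{x}),\ \tilde Z^L_{\hat\pi_t(\mathbf{x}),a}(\mathbf{x},t,\delta)>\varphi^{\mathrm I,L}_{\hat\pi_t(\mathbf{x}),a}(\bm N_t,\alpha,\mathbf{x})\}$; with $w^L_{a,a'}(\mathbf{x},t)=[\sqrt{2\varphi^{\mathrm{II},L}_{a,a'}(\bm N_t,\alpha,\mathbf{x})(S_t^2(a)\Sigma_t(\mathbf{x},a)+S_t^2(a')\Sigma_t(\mathbf{x},a'))}-(\mathbf f(\mathbf{x})^{\mathrm T}\hat{\bm\beta}_t(a)-\mathbf f(\mathbf{x})^{\mathrm T}\hat{\bm\beta}_t(a'))]_+$ and $r^L(\mathbf{x},t)=\max_{a\ne\hat\pi_t(\mathbf{x})}w^L_{\hat\pi_t(\mathbf{x}),a}(\mathbf{x},t)$, $\tau^{\mathrm{II},L}_{\alpha,\delta}=\inf\{t\ge t_0:\sum_{\mathbf{x}}p(\mathbf{x})r^L(\mathbf{x},t)\le\delta\}$. Equal allocation: samples are allocated uniformly across actions, so that $N_t(a)=t/k$ for all $a\in\mathcal A$; the sampled context at each stage follows a distribution $P^s$. Assumption A: $\Sigma:=\mathbb E_{\mathbf{X}\sim P^s}[\mathbf f(\mathbf{X})\mathbf f(\mathbf{X})^{\mathrm T}]$ is positive definite and $\mathbf f(\mathbf{x})\ne0$ for all $\mathbf{x}\in\mathcal X$. Assumption B: there exist constants $0<L\le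 U<\infty$ with $L\le\|\mathbf f(\mathbf{x})\|_2^2\le U$ for all $\mathbf{x}\in\mathcal X$. *)

theory Defs
  imports "HOL-Analysis.Analysis" "HOL-Probability.Probability"
begin

text \<open>Actions are indexed by 0..<k. Contexts are vectors in
  real^'d (d = CARD('d)); the feature map is f. Samples are indexed by s = 0,1,2,...;
  the statistics at "time t" use the t samples s < t. Equal allocation: round robin,
  A_s = s mod k.\<close>

definition act :: "nat \<Rightarrow> nat \<Rightarrow> nat" where
  "act k s = s mod k"

definition samp :: "nat \<Rightarrow> nat \<Rightarrow> nat \<Rightarrow> nat set" where
  "samp k t a = {s. s < t \<and> act k s = a}"

definition Nt :: "nat \<Rightarrow> nat \<Rightarrow> nat \<Rightarrow> nat" where
  "Nt k t a = card (samp k t a)"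

definition outer :: "real^'d \<Rightarrow> real^'d^'d" where
  "outer v = (\<chi> i j. v$i * v$j)"

definition posdef :: "real^'d^'d \<Rightarrow> bool" where
  "posdef A \<longleftrightarrow> (\<forall>v. v \<noteq> 0 \<longrightarrow> v \<bullet> (A *v v) > 0)"

text \<open>Observation Y_s = f(X_s)^T beta(A_s) + eps_s with eps_s = sigma(A_s) Z_s, Z_s standard normal.\<close>
definition obsY :: "('c \<Rightarrow> real^'d) \<Rightarrow> (nat \<Rightarrow> real^'d) \<Rightarrow> (nat \<Rightarrow> real) \<Rightarrow> nat
    \<Rightarrow> (nat \<Rightarrow> 'c) \<Rightarrow> (nat \<Rightarrow> real) \<Rightarrow> nat \<Rightarrow> real" where
  "obsY f \<beta> \<sigma>2 k X Z s = f (X s) \<bullet> \<beta> (act k s) + sqrt (\<sigma>2 (act k s)) * Z s"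

definition Dt :: "('c \<Rightarrow> real^'d) \<Rightarrow> nat \<Rightarrow> (nat \<Rightarrow> 'c) \<Rightarrow> nat \<Rightarrow> nat \<Rightarrow> real^'d^'d" where
  "Dt f k X t a = (\<Sum>s\<in>samp k t a. outer (f (X s)))"

definition betahat :: "('c \<Rightarrow> real^'d) \<Rightarrow> nat \<Rightarrow> (nat \<Rightarrow> 'c) \<Rightarrow> (nat \<Rightarrow> real) \<Rightarrow> nat \<Rightarrow> nat \<Rightarrow> real^'d" where
  "betahat f k X Y t a = matrix_inv (Dt f k X t a) *v (\<Sum>s\<in>samp k t a. Y s *\<^sub>R f (X s))"

definition S2 :: "('c \<Rightarrow> real^'d) \<Rightarrow> nat \<Rightarrow> (nat \<Rightarrow> 'c) \<Rightarrow> (nat \<Rightarrow> real) \<Rightarrow> nat \<Rightarrow> nat \<Rightarrow> real" where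
  "S2 f k X Y t a = (\<Sum>s\<in>samp k t a. (Y s - f (X s) \<bullet> betahat f k X Y t a)\<^sup>2)
                      / (real (Nt k t a) - real CARD('d))"

definition Sig :: "('c \<Rightarrow> real^'d) \<Rightarrow> nat \<Rightarrow> (nat \<Rightarrow> 'c) \<Rightarrow> nat \<Rightarrow> 'c \<Rightarrow> nat \<Rightarrow> real" where
  "Sig f k X t x a = f x \<bullet> (matrix_inv (Dt f k X t a) *v f x)"

definition pihat :: "('c \<Rightarrow> real^'d) \<Rightarrow> nat \<Rightarrow> (nat \<Rightarrow> 'c) \<Rightarrow> (nat \<Rightarrow> real) \<Rightarrow> nat \<Rightarrow> 'c \<Rightarrow> nat" where
  "pihat f k X Y t x = (SOME a. a < k \<and> (\<forall>b<k. f x \<bullet> betahat f k X Y t b \<le> f x \<bullet> betahat f k X Y t a))"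

definition gammaL :: "real \<Rightarrow> real \<Rightarrow> real \<Rightarrow> real \<Rightarrow> real \<Rightarrow> real" where
  "gammaL eps d t1 t2 al =
     (t1 - d) * t2 / max ((al\<^sup>2 / (t2 + 1)) powr (1 / (t1 - d + 1)) * (t2 + 1) - 1) eps - (t1 - d)"

definition phiL :: "real \<Rightarrow> ('c \<Rightarrow> real^'d) \<Rightarrow> nat \<Rightarrow> (nat \<Rightarrow> 'c) \<Rightarrow> nat \<Rightarrow> real \<Rightarrow> 'c \<Rightarrow> nat \<Rightarrow> nat \<Rightarrow> real" where
  "phiL eps f k X t ar x a a' =
     max (1/2 * gammaL eps (real CARD('d)) (real (Nt k t a)) (1 / Sig f k X t x a)
                 (ar * (1 / Sig f k X t x a' + 1) powr (-1/2)))
         (1/2 * gammaL eps (real CARD('d)) (real (Nt k t a')) (1 / Sig f k X t x a')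
                 (ar * (1 / Sig f k X t x a + 1) powr (-1/2)))"

definition Ztil :: "('c \<Rightarrow> real^'d) \<Rightarrow> nat \<Rightarrow> (nat \<Rightarrow> 'c) \<Rightarrow> (nat \<Rightarrow> real) \<Rightarrow> 'c \<Rightarrow> nat \<Rightarrow> real \<Rightarrow> nat \<Rightarrow> nat \<Rightarrow> real" where
  "Ztil f k X Y x t \<delta> a a' =
     (f x \<bullet> betahat f k X Y t a - f x \<bullet> betahat f k X Y t a' + \<delta>)\<^sup>2
     / (2 * (S2 f k X Y t a * Sig f k X t x a + S2 f k X Y t a' * Sig f k X t x a'))"

definition alphaI :: "real \<Rightarrow> nat \<Rightarrow> nat \<Rightarrow> ('c \<Rightarrow> real) \<Rightarrow> 'c \<Rightarrow> real" where
  "alphaI \<alpha> k m p x = \<alpha> / (real (k - 1) * real m * p x)"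

definition alphaII :: "real \<Rightarrow> nat \<Rightarrow> nat \<Rightarrow> real" where
  "alphaII \<alpha> k m = \<alpha> / (real (k - 1) * real m)"

text \<open>t_0 = inf{t : D_t(a) positive definite for all a} (infinite if never).\<close>
definition t0 :: "('c \<Rightarrow> real^'d) \<Rightarrow> nat \<Rightarrow> (nat \<Rightarrow> 'c) \<Rightarrow> enat" where
  "t0 f k X = (INF t\<in>{t. \<forall>a<k. posdef (Dt f k X t a)}. enat t)"

definition stopI :: "real \<Rightarrow> ('c \<Rightarrow> real^'d) \<Rightarrow> 'c set \<Rightarrow> ('c \<Rightarrow> real) \<Rightarrow> real \<Rightarrow> real \<Rightarrow> nat
     \<Rightarrow> (nat \<Rightarrow> 'c) \<Rightarrow> (nat \<Rightarrow> real) \<Rightarrow> nat \<Rightarrow> bool" where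
  "stopI eps f Xs p \<alpha> \<delta> k X Y t \<longleftrightarrow>
     (\<forall>x\<in>Xs. \<forall>a<k. a \<noteq> pihat f k X Y t x \<longrightarrow>
        Ztil f k X Y x t \<delta> (pihat f k X Y t x) a
          > phiL eps f k X t (alphaI \<alpha> k (card Xs) p x) x (pihat f k X Y t x) a)"

definition wL :: "real \<Rightarrow> ('c \<Rightarrow> real^'d) \<Rightarrow> 'c set \<Rightarrow> real \<Rightarrow> nat
     \<Rightarrow> (nat \<Rightarrow> 'c) \<Rightarrow> (nat \<Rightarrow> real) \<Rightarrow> nat \<Rightarrow> 'c \<Rightarrow> nat \<Rightarrow> nat \<Rightarrow> real" where
  "wL eps f Xs \<alpha> k X Y t x a a' =
     max 0 (sqrt (2 * phiL eps f k X t (alphaII \<alpha> k (card Xs)) x a a'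
                    * (S2 f k X Y t a * Sig f k X t x a + S2 f k X Y t a' * Sig f k X t x a'))
            - (f x \<bullet> betahat f k X Y t a - f x \<bullet> betahat f k X Y t a'))"

definition rL :: "real \<Rightarrow> ('c \<Rightarrow> real^'d) \<Rightarrow> 'c set \<Rightarrow> real \<Rightarrow> nat
     \<Rightarrow> (nat \<Rightarrow> 'c) \<Rightarrow> (nat \<Rightarrow> real) \<Rightarrow> nat \<Rightarrow> 'c \<Rightarrow> real" where
  "rL eps f Xs \<alpha> k X Y t x =
     Max {wL eps f Xs \<alpha> k X Y t x (pihat f k X Y t x) a | a. a < k \<and> a \<noteq> pihat f k X Y t x}"

definition stopII :: "real \<Rightarrow> ('c \<Rightarrow> real^'d) \<Rightarrow> 'c set \<Rightarrow> ('c \<Rightarrow> real) \<Rightarrow> real \<Rightarrow> real \<Rightarrow> nat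
     \<Rightarrow> (nat \<Rightarrow> 'c) \<Rightarrow> (nat \<Rightarrow> real) \<Rightarrow> nat \<Rightarrow> bool" where
  "stopII eps f Xs p \<alpha> \<delta> k X Y t \<longleftrightarrow> (\<Sum>x\<in>Xs. p x * rL eps f Xs \<alpha> k X Y t x) \<le> \<delta>"

definition tauI :: "real \<Rightarrow> ('c \<Rightarrow> real^'d) \<Rightarrow> 'c set \<Rightarrow> ('c \<Rightarrow> real) \<Rightarrow> real \<Rightarrow> real \<Rightarrow> nat
     \<Rightarrow> (nat \<Rightarrow> 'c) \<Rightarrow> (nat \<Rightarrow> real) \<Rightarrow> enat" where
  "tauI eps f Xs p \<alpha> \<delta> k X Y =
     (INF t\<in>{t. t0 f k X \<le> enat t \<and> stopI eps f Xs p \<alpha> \<delta> k X Y t}. enat t)"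

definition tauII :: "real \<Rightarrow> ('c \<Rightarrow> real^'d) \<Rightarrow> 'c set \<Rightarrow> ('c \<Rightarrow> real) \<Rightarrow> real \<Rightarrow> real \<Rightarrow> nat
     \<Rightarrow> (nat \<Rightarrow> 'c) \<Rightarrow> (nat \<Rightarrow> real) \<Rightarrow> enat" where
  "tauII eps f Xs p \<alpha> \<delta> k X Y =
     (INF t\<in>{t. t0 f k X \<le> enat t \<and> stopII eps f Xs p \<alpha> \<delta> k X Y t}. enat t)"

text \<open>Probability model: W_s = (X_s, Z_s) i.i.d., X_s ~ P^s independent of Z_s ~ N(0,1).\<close>
definition sample_law :: "'c pmf \<Rightarrow> ('c \<times> real) measure" where
  "sample_law Ps = measure_pmf Ps \<Otimes>\<^sub>M density lborel std_normal_density"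

definition iid_model :: "'m measure \<Rightarrow> 'c pmf \<Rightarrow> (nat \<Rightarrow> 'm \<Rightarrow> 'c \<times> real) \<Rightarrow> bool" where
  "iid_model M Ps W \<longleftrightarrow> prob_space M \<and>
     prob_space.indep_vars M (\<lambda>_. sample_law Ps) W UNIV \<and>
     (\<forall>s. distr M (sample_law Ps) (W s) = sample_law Ps)"

definition ETI :: "'m measure \<Rightarrow> (nat \<Rightarrow> 'm \<Rightarrow> 'c \<times> real) \<Rightarrow> real \<Rightarrow> ('c \<Rightarrow> real^'d) \<Rightarrow> 'c set
     \<Rightarrow> ('c \<Rightarrow> real) \<Rightarrow> (nat \<Rightarrow> real^'d) \<Rightarrow> (nat \<Rightarrow> real) \<Rightarrow> real \<Rightarrow> real \<Rightarrow> nat \<Rightarrow> ennreal" where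
  "ETI M W eps f Xs p \<beta> \<sigma>2 \<alpha> \<delta> k =
     (\<integral>\<^sup>+ \<omega>. ennreal_of_enat (tauI eps f Xs p \<alpha> \<delta> k (\<lambda>s. fst (W s \<omega>))
        (obsY f \<beta> \<sigma>2 k (\<lambda>s. fst (W s \<omega>)) (\<lambda>s. snd (W s \<omega>)))) \<partial>M)"

definition ETII :: "'m measure \<Rightarrow> (nat \<Rightarrow> 'm \<Rightarrow> 'c \<times> real) \<Rightarrow> real \<Rightarrow> ('c \<Rightarrow> real^'d) \<Rightarrow> 'c set
     \<Rightarrow> ('c \<Rightarrow> real) \<Rightarrow> (nat \<Rightarrow> real^'d) \<Rightarrow> (nat \<Rightarrow> real) \<Rightarrow> real \<Rightarrow> real \<Rightarrow> nat \<Rightarrow> ennreal" where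
  "ETII M W eps f Xs p \<beta> \<sigma>2 \<alpha> \<delta> k =
     (\<integral>\<^sup>+ \<omega>. ennreal_of_enat (tauII eps f Xs p \<alpha> \<delta> k (\<lambda>s. fst (W s \<omega>))
        (obsY f \<beta> \<sigma>2 k (\<lambda>s. fst (W s \<omega>)) (\<lambda>s. snd (W s \<omega>)))) \<partial>M)"

end

theory Submission
  imports Defs
begin


lemma outer_mv: "outer u *v v = (u \<bullet> v) *\<^sub>R u"
  by (simp add: outer_def matrix_vector_mult_def vec_eq_iff inner_vec_def sum_distrib_left mult_ac)

lemma sum_mv: "(\<Sum>s\<in>S. A s) *v v = (\<Sum>s\<in>S. A s *v v)"
  by (induct S rule: infinite_finite_induct) (auto simp: matrix_vector_mult_add_rdistrib)

lemma Dt_mv: "Dt f k X t a *v v = (\<Sum>s\<in>samp k t a. (f (X s) \<bullet> v) *\<^sub>R f (X s))"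
  unfolding Dt_def sum_mv outer_mv ..

lemma Dt_quad: "u \<bullet> (Dt f k X t a *v v) = (\<Sum>s\<in>samp k t a. (f (X s) \<bullet> v) * (f (X s) \<bullet> u))"
  unfolding Dt_mv inner_sum_right by (simp add: inner_commute)

lemma posdef_invertible:
  fixes D :: "real^'d^'d"
  assumes "posdef D" shows "invertible D"
proof -
  have "inj ((*v) D)"
  proof (rule linear_injective_0[THEN iffD2])
    show "linear ((*v) D)" by (simp add: matrix_vector_mul_linear)
    show "\<forall>x. D *v x = 0 \<longrightarrow> x = 0"
      using assms unfolding posdef_def by (metis inner_zero_right order_less_irrefl)
  qed
  then show ?thesis using matrix_left_invertible_injective invertible_left_inverse by blast
qed

lemma matrix_inv_props:
  fixes D :: "real^'d^'d"
  assumes "invertible D" shows "D ** matrix_inv D = mat 1" "matrix_inv D ** D = mat 1"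
proof -
  from assms obtain B where "D ** B = mat 1 \<and> B ** D = mat 1" unfolding invertible_def by blast
  then have "D ** matrix_inv D = mat 1 \<and> matrix_inv D ** D = mat 1"
    unfolding matrix_inv_def by (rule someI)
  then show "D ** matrix_inv D = mat 1" "matrix_inv D ** D = mat 1" by auto
qed

lemma matrix_inv_mv:
  fixes D :: "real^'d^'d"
  assumes "invertible D" shows "D *v (matrix_inv D *v c) = c" "matrix_inv D *v (D *v c) = c"
  using matrix_inv_props[OF assms] by (simp_all add: matrix_vector_mul_assoc)



lemma samp_finite: "finite (samp k t a)"
  unfolding samp_def by auto

lemma Dt_quad_sym: "u \<bullet> (Dt f k X t a *v v) = v \<bullet> (Dt f k X t a *v u)"
  unfolding Dt_quad by (simp add: mult.commute)

lemma Dt_quad_self: "v \<bullet> (Dt f k X t a *v v) = (\<Sum>s\<in>samp k t a. (f (X s) \<bullet> v)\<^sup>2)"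
  unfolding Dt_quad by (simp add: power2_eq_square)

lemma Sig_upper:
  assumes c: "c > 0" and pd: "\<forall>v. v \<bullet> (Dt f k X t a *v v) \<ge> c * (norm v)\<^sup>2"
    and fx: "f x \<noteq> 0"
  shows "Sig f k X t x a > 0" "Sig f k X t x a \<le> (norm (f x))\<^sup>2 / c"
proof -
  let ?D = "Dt f k X t a"
  have posd: "posdef ?D" unfolding posdef_def
  proof (intro allI impI)
    fix v :: "real^'a" assume "v \<noteq> 0"
    then have "c * (norm v)\<^sup>2 > 0" using c by simp
    then show "v \<bullet> (?D *v v) > 0" using pd by (meson less_le_trans)
  qed
  have inv: "invertible ?D" by (rule posdef_invertible[OF posd])
  define g where "g = matrix_inv ?D *v f x"
  have Dg: "?D *v g = f x" unfolding g_def by (rule matrix_inv_mv(1)[OF inv])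
  have g0: "g \<noteq> 0" using Dg fx by auto
  have Sg: "Sig f k X t x a = g \<bullet> (?D *v g)"
    unfolding Sig_def g_def[symmetric] using Dg by (simp add: inner_commute)
  then show "Sig f k X t x a > 0" using posd g0 unfolding posdef_def by simp
  have "c * (norm g)\<^sup>2 \<le> g \<bullet> (?D *v g)" using pd by blast
  also have "\<dots> = f x \<bullet> g" using Dg by (simp add: inner_commute)
  also have "\<dots> \<le> norm (f x) * norm g" by (rule norm_cauchy_schwarz)
  finally have "c * (norm g)\<^sup>2 \<le> norm (f x) * norm g" .
  then have ng: "c * norm g \<le> norm (f x)" using g0 by (simp add: power2_eq_square)
  have "Sig f k X t x a = f x \<bullet> g" using Sg Dg by (simp add: inner_commute)
  also have "\<dots> \<le> norm (f x) * norm g" by (rule norm_cauchy_schwarz)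
  also have "\<dots> \<le> norm (f x) * (norm (f x) / c)"
    using ng c by (intro mult_left_mono) (auto simp: field_simps)
  finally show "Sig f k X t x a \<le> (norm (f x))\<^sup>2 / c" by (simp add: power2_eq_square)
qed

lemma Sig_lower:
  assumes inv: "invertible (Dt f k X t a)"
    and U: "U > 0" and fb: "\<forall>s\<in>samp k t a. (norm (f (X s)))\<^sup>2 \<le> U"
    and q: "real (card (samp k t a)) \<le> q" and qpos: "q > 0"
  shows "Sig f k X t x a \<ge> (norm (f x))\<^sup>2 / (q * U)"
proof -
  let ?D = "Dt f k X t a" and ?S = "samp k t a"
  define g where "g = matrix_inv ?D *v f x"
  have Dg: "?D *v g = f x" unfolding g_def by (rule matrix_inv_mv(1)[OF inv])
  have Sg: "Sig f k X t x a = (\<Sum>s\<in>?S. (f (X s) \<bullet> g)\<^sup>2)"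
    unfolding Sig_def g_def[symmetric] using Dg Dt_quad_self[of g f k X t a] by (simp add: inner_commute)
  have cross: "(\<Sum>s\<in>?S. (f (X s) \<bullet> g) * (f (X s) \<bullet> f x)) = (norm (f x))\<^sup>2"
    using Dt_quad[of "f x" f k X t a g] Dg by (simp add: power2_norm_eq_inner)
  have sq: "(\<Sum>s\<in>?S. (f (X s) \<bullet> f x)\<^sup>2) \<le> q * U * (norm (f x))\<^sup>2"
  proof -
    have "(\<Sum>s\<in>?S. (f (X s) \<bullet> f x)\<^sup>2) \<le> (\<Sum>s\<in>?S. U * (norm (f x))\<^sup>2)"
    proof (rule sum_mono)
      fix s assume s: "s \<in> ?S"
      have "(f (X s) \<bullet> f x)\<^sup>2 \<le> (norm (f (X s)) * norm (f x))\<^sup>2"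
        using Cauchy_Schwarz_ineq2[of "f (X s)" "f x"]
        by (metis abs_ge_zero power2_abs power_mono)
      also have "\<dots> = (norm (f (X s)))\<^sup>2 * (norm (f x))\<^sup>2" by (simp add: power_mult_distrib)
      also have "\<dots> \<le> U * (norm (f x))\<^sup>2" using fb s by (intro mult_right_mono) auto
      finally show "(f (X s) \<bullet> f x)\<^sup>2 \<le> U * (norm (f x))\<^sup>2" .
    qed
    also have "\<dots> = real (card ?S) * (U * (norm (f x))\<^sup>2)" by simp
    also have "\<dots> \<le> q * (U * (norm (f x))\<^sup>2)" using q U by (intro mult_right_mono) auto
    finally show ?thesis by simp
  qed
  define \<tau> where "\<tau> = 1 / (q * U)"
  have "0 \<le> (\<Sum>s\<in>?S. ((f (X s) \<bullet> g) - \<tau> * (f (X s) \<bullet> f x))\<^sup>2)" by (intro sum_nonneg) auto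
  also have "\<dots> = (\<Sum>s\<in>?S. (f (X s) \<bullet> g)\<^sup>2) - 2 * \<tau> * (\<Sum>s\<in>?S. (f (X s) \<bullet> g) * (f (X s) \<bullet> f x))
       + \<tau>\<^sup>2 * (\<Sum>s\<in>?S. (f (X s) \<bullet> f x)\<^sup>2)"
    by (simp add: power2_diff sum.distrib sum_subtractf sum_distrib_left algebra_simps power_mult_distrib)
  finally have "0 \<le> Sig f k X t x a - 2 * \<tau> * (norm (f x))\<^sup>2 + \<tau>\<^sup>2 * (\<Sum>s\<in>?S. (f (X s) \<bullet> f x)\<^sup>2)"
    using Sg cross by simp
  moreover have "\<tau>\<^sup>2 * (\<Sum>s\<in>?S. (f (X s) \<bullet> f x)\<^sup>2) \<le> \<tau>\<^sup>2 * (q * U * (norm (f x))\<^sup>2)"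
    using sq by (intro mult_left_mono) auto
  moreover have "\<tau>\<^sup>2 * (q * U * (norm (f x))\<^sup>2) = \<tau> * (norm (f x))\<^sup>2"
    using qpos U unfolding \<tau>_def by (simp add: power2_eq_square field_simps)
  ultimately have "\<tau> * (norm (f x))\<^sup>2 \<le> Sig f k X t x a" by linarith
  then show ?thesis unfolding \<tau>_def by simp
qed



lemma betahat_eq:
  assumes inv: "invertible (Dt f k X t a)"
  shows "Dt f k X t a *v betahat f k X Y t a = (\<Sum>s\<in>samp k t a. Y s *\<^sub>R f (X s))"
  unfolding betahat_def by (rule matrix_inv_mv(1)[OF inv])

lemma RSS_le:
  assumes inv: "invertible (Dt f k X t a)"
  shows "(\<Sum>s\<in>samp k t a. (Y s - f (X s) \<bullet> betahat f k X Y t a)\<^sup>2)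
          \<le> (\<Sum>s\<in>samp k t a. (Y s - f (X s) \<bullet> b)\<^sup>2)"
proof -
  let ?S = "samp k t a" and ?bh = "betahat f k X Y t a"
  define e where "e = ?bh - b"
  define r where "r s = Y s - f (X s) \<bullet> ?bh" for s
  have c1: "(\<Sum>s\<in>?S. Y s * (f (X s) \<bullet> e)) = (\<Sum>s\<in>?S. Y s *\<^sub>R f (X s)) \<bullet> e"
    by (simp add: inner_sum_left)
  have c2: "(\<Sum>s\<in>?S. (f (X s) \<bullet> ?bh) * (f (X s) \<bullet> e)) = e \<bullet> (Dt f k X t a *v ?bh)"
    by (simp add: Dt_quad)
  have cross: "(\<Sum>s\<in>?S. r s * (f (X s) \<bullet> e)) = 0"
  proof -
    have "(\<Sum>s\<in>?S. r s * (f (X s) \<bullet> e)) = (\<Sum>s\<in>?S. Y s * (f (X s) \<bullet> e)) - (\<Sum>s\<in>?S. (f (X s) \<bullet> ?bh) * (f (X s) \<bullet> e))"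
      unfolding r_def by (simp add: left_diff_distrib sum_subtractf)
    also have "\<dots> = 0" unfolding c1 c2 betahat_eq[OF inv] by (simp add: inner_commute)
    finally show ?thesis .
  qed
  have "(\<Sum>s\<in>?S. (Y s - f (X s) \<bullet> b)\<^sup>2) = (\<Sum>s\<in>?S. (r s + f (X s) \<bullet> e)\<^sup>2)"
    unfolding r_def e_def by (simp add: inner_diff_right)
  also have "\<dots> = (\<Sum>s\<in>?S. (r s)\<^sup>2) + 2 * (\<Sum>s\<in>?S. r s * (f (X s) \<bullet> e)) + (\<Sum>s\<in>?S. (f (X s) \<bullet> e)\<^sup>2)"
    by (simp add: power2_sum sum.distrib sum_distrib_left mult.assoc)
  also have "\<dots> \<ge> (\<Sum>s\<in>?S. (r s)\<^sup>2)" unfolding cross by (simp add: sum_nonneg)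
  finally show ?thesis unfolding r_def by simp
qed

lemma RSS_obs_le:
  assumes inv: "invertible (Dt f k X t a)" and sig: "\<sigma>2 a \<ge> 0"
  shows "(\<Sum>s\<in>samp k t a. (obsY f \<beta> \<sigma>2 k X Z s - f (X s) \<bullet> betahat f k X (obsY f \<beta> \<sigma>2 k X Z) t a)\<^sup>2)
          \<le> \<sigma>2 a * (\<Sum>s\<in>samp k t a. (Z s)\<^sup>2)"
proof -
  have "(\<Sum>s\<in>samp k t a. (obsY f \<beta> \<sigma>2 k X Z s - f (X s) \<bullet> betahat f k X (obsY f \<beta> \<sigma>2 k X Z) t a)\<^sup>2)
     \<le> (\<Sum>s\<in>samp k t a. (obsY f \<beta> \<sigma>2 k X Z s - f (X s) \<bullet> \<beta> a)\<^sup>2)" by (rule RSS_le[OF inv])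
  also have "\<dots> = (\<Sum>s\<in>samp k t a. \<sigma>2 a * (Z s)\<^sup>2)"
    by (intro sum.cong refl) (auto simp: obsY_def samp_def power_mult_distrib sig)
  finally show ?thesis by (simp add: sum_distrib_left)
qed

lemma pihat_spec:
  assumes "k > 0"
  shows "pihat f k X Y t x < k \<and> (\<forall>b<k. f x \<bullet> betahat f k X Y t b \<le> f x \<bullet> betahat f k X Y t (pihat f k X Y t x))"
proof -
  let ?g = "\<lambda>b. f x \<bullet> betahat f k X Y t b"
  have "\<exists>a. a < k \<and> (\<forall>b<k. ?g b \<le> ?g a)"
  proof -
    have fin: "finite (?g ` {..<k})" "?g ` {..<k} \<noteq> {}" using assms by auto
    then have "Max (?g ` {..<k}) \<in> ?g ` {..<k}" by (rule Max_in)
    then obtain a where a: "a < k" "?g a = Max (?g ` {..<k})" by auto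
    then show ?thesis using fin by (intro exI[of _ a]) auto
  qed
  then show ?thesis unfolding pihat_def by (rule someI_ex)
qed

lemma samp_mult:
  assumes "a < k"
  shows "samp k (k * q) a = (\<lambda>j. a + j * k) ` {..<q}"
proof (rule set_eqI)
  fix s
  show "s \<in> samp k (k * q) a \<longleftrightarrow> s \<in> (\<lambda>j. a + j * k) ` {..<q}"
  proof
    assume "s \<in> samp k (k * q) a"
    then have s: "s < k * q" "s mod k = a" unfolding samp_def act_def by auto
    have "s = a + (s div k) * k" using s(2) by (metis add.commute div_mult_mod_eq)
    moreover have "s div k < q" using s(1) by (metis less_mult_imp_div_less mult.commute)
    ultimately show "s \<in> (\<lambda>j. a + j * k) ` {..<q}" by auto
  next
    assume "s \<in> (\<lambda>j. a + j * k) ` {..<q}"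
    then obtain j where j: "j < q" "s = a + j * k" by auto
    have "a + j * k < k + j * k" using assms by simp
    also have "\<dots> = k * (j + 1)" by (simp add: algebra_simps)
    also have "\<dots> \<le> k * q" using j by (intro mult_left_mono) auto
    finally show "s \<in> samp k (k * q) a" unfolding samp_def act_def using j assms by auto
  qed
qed

lemma card_samp_mult:
  assumes "a < k" shows "Nt k (k * q) a = q"
proof -
  have "inj_on (\<lambda>j. a + j * k) {..<q}" using assms by (auto simp: inj_on_def)
  then show ?thesis unfolding Nt_def samp_mult[OF assms] by (simp add: card_image)
qed

lemma samp_mult_Suc:
  assumes "a < k"
  shows "samp k (k * Suc q) a = insert (a + q * k) (samp k (k * q) a)"
  unfolding samp_mult[OF assms] lessThan_Suc by auto

lemma samp_mono: "t \<le> t' \<Longrightarrow> samp k t a \<subseteq> samp k t' a"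
  unfolding samp_def by auto



lemma gamma_bound:
  fixes eps d t1 t2 al l :: real
  assumes eps: "eps > 0" and dt: "d \<le> t1" and t2: "t2 + 1 \<ge> 4" and al: "al \<noteq> 0"
    and l0: "l \<ge> 0" and ll: "ln ((t2 + 1) / al\<^sup>2) \<le> l" and nl: "t1 - d + 1 \<ge> 2 * l"
  shows "gammaL eps d t1 t2 al \<le> 4 * l"
proof -
  define n where "n = t1 - d + 1"
  have n1: "n \<ge> 1" using dt unfolding n_def by simp
  define \<rho> where "\<rho> = al\<^sup>2 / (t2 + 1)"
  have \<rho>0: "\<rho> > 0" using al t2 unfolding \<rho>_def by simp
  define Q where "Q = \<rho> powr (1 / n)"
  have Qe: "Q = exp (ln \<rho> / n)" unfolding Q_def powr_def using \<rho>0 by simp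
  have lnr: "ln \<rho> \<ge> - l"
  proof -
    have "ln \<rho> = - ln ((t2 + 1) / al\<^sup>2)" unfolding \<rho>_def using al t2
      by (simp add: ln_div)
    then show ?thesis using ll by simp
  qed
  have "Q \<ge> 1 + ln \<rho> / n" unfolding Qe by (rule exp_ge_add_one_self)
  moreover have "ln \<rho> / n \<ge> - l / n" using lnr n1 by (intro divide_right_mono) auto
  ultimately have Q1: "Q \<ge> 1 - l / n" by simp
  have ln2: "l / n \<le> 1/2" using nl n1 unfolding n_def[symmetric] by (simp add: field_simps)
  have Qh: "Q \<ge> 1/2" using Q1 ln2 by simp
  define Mx where "Mx = max (Q * (t2 + 1) - 1) eps"
  have gdef: "gammaL eps d t1 t2 al = (t1 - d) * t2 / Mx - (t1 - d)"
    unfolding gammaL_def Mx_def Q_def \<rho>_def n_def by simp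
  have td: "t1 - d \<ge> 0" using dt by simp
  show ?thesis
  proof (cases "Q \<ge> 1")
    case True
    have "Q * (t2 + 1) \<ge> 1 * (t2 + 1)" using True t2 by (intro mult_right_mono) auto
    then have "Mx \<ge> t2" unfolding Mx_def by auto
    moreover have t2p: "t2 > 0" using t2 by simp
    ultimately have "t2 / Mx \<le> 1" by simp
    then have "(t1 - d) * (t2 / Mx) \<le> (t1 - d) * 1" using td by (intro mult_left_mono) auto
    then have "gammaL eps d t1 t2 al \<le> 0" unfolding gdef by simp
    then show ?thesis using l0 by simp
  next
    case False
    have QT: "Q * (t2 + 1) \<ge> 2"
    proof -
      have "Q * (t2 + 1) \<ge> (1/2) * 4" using Qh t2 by (intro mult_mono) auto
      then show ?thesis by simp
    qed
    have Mx1: "Mx \<ge> Q * (t2 + 1) / 2" unfolding Mx_def using QT by (simp add: le_max_iff_disj)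
    have Mx0: "Mx > 0" using Mx1 QT by simp
    have num: "t2 - Mx \<le> (1 - Q) * (t2 + 1)" unfolding Mx_def by (auto simp: algebra_simps)
    have "gammaL eps d t1 t2 al = (t1 - d) * ((t2 - Mx) / Mx)"
      unfolding gdef using Mx0 by (simp add: field_simps)
    also have "\<dots> \<le> (t1 - d) * ((1 - Q) * (t2 + 1) / Mx)"
      using num Mx0 td by (intro mult_left_mono divide_right_mono) auto
    also have "(1 - Q) * (t2 + 1) / Mx \<le> (1 - Q) * (t2 + 1) / (Q * (t2 + 1) / 2)"
      using False QT Mx1 t2 by (intro divide_left_mono mult_nonneg_nonneg) auto
    also have "\<dots> = 2 * (1 - Q) / Q"
    proof -
      have "Q * (t2 + 1) / 2 = (Q / 2) * (t2 + 1)" by simp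
      have "(1 - Q) * (t2 + 1) / (Q * (t2 + 1) / 2) = ((1 - Q) / (Q / 2)) * ((t2 + 1) / (t2 + 1))"
        by (simp only: times_divide_times_eq)
      also have "\<dots> = (1 - Q) / (Q / 2)" using t2 by simp
      finally show ?thesis by simp
    qed
    also have "\<dots> \<le> 4 * (1 - Q)"
    proof -
      have "2 * (1 - Q) / Q \<le> 2 * (1 - Q) / (1/2)" using Qh False by (intro divide_left_mono) auto
      then show ?thesis by simp
    qed
    finally have g1: "gammaL eps d t1 t2 al \<le> (t1 - d) * (4 * (1 - Q))" using td by (simp add: mult_left_mono)
    have "(t1 - d) * (4 * (1 - Q)) \<le> (t1 - d) * (4 * (l / n))"
      using Q1 td by (intro mult_left_mono) auto
    also have "\<dots> = 4 * l * ((t1 - d) / n)" by simp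
    also have "\<dots> \<le> 4 * l * 1" using l0 td n1 unfolding n_def by (intro mult_left_mono) auto
    finally show ?thesis using g1 by simp
  qed
qed



lemma gamma_bound2:
  fixes eps d q A B ar a1 R :: real
  assumes eps: "eps > 0" and dq: "d \<le> q" and A4: "A + 1 \<ge> 4" and B4: "B + 1 \<ge> 4"
    and AR: "A + 1 \<le> R" and BR: "B + 1 \<le> R" and a1: "a1 > 0" and ar: "ar \<ge> a1"
    and l0: "2 * ln (R / a1) \<ge> 0" and nl: "q - d + 1 \<ge> 2 * (2 * ln (R / a1))"
  shows "gammaL eps d q A (ar * (B + 1) powr (-1/2)) \<le> 4 * (2 * ln (R / a1))"
proof (rule gamma_bound[OF eps dq A4 _ l0 _ nl])
  have Bp: "B + 1 > 0" using B4 by simp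
  show al: "ar * (B + 1) powr (- 1 / 2) \<noteq> 0" using a1 ar Bp by simp
  have sq: "((B + 1) powr (-1/2))\<^sup>2 = 1 / (B + 1)"
    using Bp by (simp add: power2_eq_square powr_add[symmetric] powr_minus_divide)
  have sq2: "(ar * (B + 1) powr (- 1 / 2))\<^sup>2 = ar\<^sup>2 / (B + 1)"
    by (simp only: power_mult_distrib sq) simp
  have "(A + 1) / (ar * (B + 1) powr (- 1 / 2))\<^sup>2 = (A + 1) * (B + 1) / ar\<^sup>2"
    unfolding sq2 using Bp ar a1 by (simp add: field_simps)
  also have "\<dots> \<le> R * R / a1\<^sup>2"
  proof (rule frac_le)
    show "0 \<le> R * R" using AR A4 by simp
    show "(A + 1) * (B + 1) \<le> R * R" using AR BR A4 B4 by (intro mult_mono) auto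
    show "0 < a1\<^sup>2" using a1 by simp
    show "a1\<^sup>2 \<le> ar\<^sup>2" using a1 ar by (intro power_mono) auto
  qed
  also have "\<dots> = (R / a1)\<^sup>2" by (simp add: power2_eq_square)
  finally have le: "(A + 1) / (ar * (B + 1) powr (- 1 / 2))\<^sup>2 \<le> (R / a1)\<^sup>2" .
  have pos: "(A + 1) / (ar * (B + 1) powr (- 1 / 2))\<^sup>2 > 0" using A4 al by simp
  have "ln ((A + 1) / (ar * (B + 1) powr (- 1 / 2))\<^sup>2) \<le> ln ((R / a1)\<^sup>2)"
    using le pos by (rule ln_mono)
  also have "\<dots> = 2 * ln (R / a1)" using AR A4 a1 by (simp add: ln_realpow)
  finally show "ln ((A + 1) / (ar * (B + 1) powr (- 1 / 2))\<^sup>2) \<le> 2 * ln (R / a1)" .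
qed

lemma phi_bound:
  fixes f :: "'c \<Rightarrow> real^'d"
  assumes eps: "eps > 0" and Na: "Nt k t a = q" and Nb: "Nt k t b = q"
    and dq: "real CARD('d) \<le> real q"
    and Sa: "Sig f k X t x a > 0" and Sb: "Sig f k X t x b > 0"
    and A4: "1 / Sig f k X t x a + 1 \<ge> 4" and B4: "1 / Sig f k X t x b + 1 \<ge> 4"
    and AR: "1 / Sig f k X t x a + 1 \<le> R" and BR: "1 / Sig f k X t x b + 1 \<le> R"
    and a1: "a1 > 0" and ar: "ar \<ge> a1"
    and l0: "2 * ln (R / a1) \<ge> 0" and nl: "real q - real CARD('d) + 1 \<ge> 2 * (2 * ln (R / a1))"
  shows "phiL eps f k X t ar x a b \<le> 2 * (2 * ln (R / a1))"
proof -
  have 1: "gammaL eps (real CARD('d)) (real (Nt k t a)) (1 / Sig f k X t x a)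
                 (ar * (1 / Sig f k X t x b + 1) powr (-1/2)) \<le> 4 * (2 * ln (R / a1))"
    unfolding Na by (rule gamma_bound2[OF eps dq A4 B4 AR BR a1 ar l0 nl])
  have 2: "gammaL eps (real CARD('d)) (real (Nt k t b)) (1 / Sig f k X t x b)
                 (ar * (1 / Sig f k X t x a + 1) powr (-1/2)) \<le> 4 * (2 * ln (R / a1))"
    unfolding Nb by (rule gamma_bound2[OF eps dq B4 A4 BR AR a1 ar l0 nl])
  show ?thesis unfolding phiL_def using 1 2 by simp
qed



lemma det_stop:
  fixes f :: "'c \<Rightarrow> real^'d" and X :: "nat \<Rightarrow> 'c" and Xs :: "'c set"
  assumes k2: "k \<ge> 2" and fin: "finite Xs" and ppos: "\<forall>x\<in>Xs. p x > 0" and psum: "(\<Sum>x\<in>Xs. p x) = 1"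
    and L0: "0 < L" and LU: "L \<le> U" and fLU: "\<forall>x\<in>Xs. L \<le> (norm (f x))\<^sup>2 \<and> (norm (f x))\<^sup>2 \<le> U"
    and eps: "eps > 0" and delta: "\<delta> > 0" and al0: "0 < \<alpha>" and al1: "\<alpha> < 1"
    and c: "c > 0" and pd: "\<forall>a<k. \<forall>v. v \<bullet> (Dt f k X (k*q) a *v v) \<ge> c * real q * (norm v)\<^sup>2"
    and Xin: "\<forall>s<k*q. X s \<in> Xs"
    and Zb: "\<forall>a<k. (\<Sum>s\<in>samp k (k*q) a. (Z s)\<^sup>2) \<le> 4 * real q"
    and sig: "\<forall>a<k. 0 \<le> \<sigma>2 a \<and> \<sigma>2 a \<le> \<sigma>M"
    and q2d: "2 * CARD('d) \<le> q" and qc: "3 * U \<le> c * real q"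
    and R: "R = real q * U / L + 1" and a1: "a1 = \<alpha> / (real (k - 1) * real (card Xs))"
    and l: "l = 2 * ln (R / a1)" and ql: "4 * l \<le> real q"
    and qs: "64 * \<sigma>M * U * l < \<delta>\<^sup>2 * c * real q"
    and Y: "Y = obsY f \<beta> \<sigma>2 k X Z"
  shows "t0 f k X \<le> enat (k*q)" "stopII eps f Xs p \<alpha> \<delta> k X Y (k*q)"
    "(\<forall>a<k. S2 f k X Y (k*q) a \<noteq> 0) \<Longrightarrow> stopI eps f Xs p \<alpha> \<delta> k X Y (k*q)"
proof -
  let ?t = "k * q"
  have k0: "k > 0" using k2 by simp
  have U0: "U > 0" using L0 LU by simp
  have Xne: "Xs \<noteq> {}" using psum by auto
  have m1: "real (card Xs) \<ge> 1" using fin Xne by (simp add: Suc_le_eq card_gt_0_iff)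
  have k1: "real (k - 1) \<ge> 1" using k2 by simp
  have q0: "real q > 0"
  proof (rule ccontr)
    assume "\<not> real q > 0" then have "real q = 0" by simp
    then show False using qc U0 by simp
  qed
  have dq: "real CARD('d) \<le> real q / 2" using q2d by simp
  have pd': "posdef (Dt f k X ?t a)" if "a < k" for a
    unfolding posdef_def
  proof (intro allI impI)
    fix v :: "real^'d" assume "v \<noteq> 0"
    then have "c * real q * (norm v)\<^sup>2 > 0" using c q0 by simp
    then show "v \<bullet> (Dt f k X ?t a *v v) > 0" using pd that by (meson less_le_trans)
  qed
  show "t0 f k X \<le> enat ?t" unfolding t0_def by (rule INF_lower) (use pd' in auto)
  have inv: "invertible (Dt f k X ?t a)" if "a < k" for a using posdef_invertible[OF pd'[OF that]] .
  have Nt: "Nt k ?t a = q" if "a < k" for a using card_samp_mult[OF that] by simp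
  have fbound: "\<forall>s\<in>samp k ?t a. (norm (f (X s)))\<^sup>2 \<le> U" for a
    using Xin fLU unfolding samp_def by auto
  have cq: "c * real q > 0" using c q0 by simp
  have Sig_bds: "0 < Sig f k X ?t x a \<and> Sig f k X ?t x a \<le> U / (c * real q)
      \<and> 1 / Sig f k X ?t x a + 1 \<ge> 4 \<and> 1 / Sig f k X ?t x a + 1 \<le> R"
    if a: "a < k" and x: "x \<in> Xs" for a x
  proof -
    have fx0: "f x \<noteq> 0" using fLU x L0 by auto
    have pda: "\<forall>v. v \<bullet> (Dt f k X ?t a *v v) \<ge> (c * real q) * (norm v)\<^sup>2" using pd a by simp
    note up = Sig_upper[OF cq pda fx0]
    have s0: "Sig f k X ?t x a > 0" by (rule up(1))
    have "Sig f k X ?t x a \<le> (norm (f x))\<^sup>2 / (c * real q)" by (rule up(2))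
    also have "\<dots> \<le> U / (c * real q)" using fLU x cq by (intro divide_right_mono) auto
    finally have s1: "Sig f k X ?t x a \<le> U / (c * real q)" .
    have "Sig f k X ?t x a \<ge> (norm (f x))\<^sup>2 / (real q * U)"
      by (rule Sig_lower[OF inv[OF a] U0 fbound]) (use Nt[OF a] q0 in \<open>auto simp: Nt_def\<close>)
    moreover have "(norm (f x))\<^sup>2 / (real q * U) \<ge> L / (real q * U)"
      using fLU x q0 U0 by (intro divide_right_mono) auto
    ultimately have s2: "Sig f k X ?t x a \<ge> L / (real q * U)" by simp
    have "1 / Sig f k X ?t x a \<le> 1 / (L / (real q * U))"
      using s2 s0 L0 q0 U0 by (intro divide_left_mono) auto
    then have r1: "1 / Sig f k X ?t x a + 1 \<le> R" unfolding R by simp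
    have "1 / Sig f k X ?t x a \<ge> 1 / (U / (c * real q))"
      using s1 s0 U0 cq by (intro divide_left_mono) auto
    then have "1 / Sig f k X ?t x a \<ge> c * real q / U" by simp
    moreover have "c * real q / U \<ge> 3" using qc U0 by (simp add: field_simps)
    ultimately have r2: "1 / Sig f k X ?t x a + 1 \<ge> 4" by simp
    show ?thesis using s0 s1 r1 r2 by simp
  qed
  have sM: "\<sigma>M \<ge> 0" using sig k0 by auto
  have S2_bds: "0 \<le> S2 f k X Y ?t a \<and> S2 f k X Y ?t a \<le> 8 * \<sigma>M" if a: "a < k" for a
  proof -
    have den: "real (Nt k ?t a) - real CARD('d) \<ge> real q / 2" using Nt[OF a] dq by simp
    have RSS: "(\<Sum>s\<in>samp k ?t a. (Y s - f (X s) \<bullet> betahat f k X Y ?t a)\<^sup>2) \<le> \<sigma>2 a * (\<Sum>s\<in>samp k ?t a. (Z s)\<^sup>2)"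
      unfolding Y by (rule RSS_obs_le[OF inv[OF a]]) (use sig a in auto)
    also have "\<dots> \<le> \<sigma>M * (4 * real q)"
      using sig a Zb by (intro mult_mono) (auto intro: sum_nonneg)
    finally have RSS': "(\<Sum>s\<in>samp k ?t a. (Y s - f (X s) \<bullet> betahat f k X Y ?t a)\<^sup>2) \<le> \<sigma>M * (4 * real q)" .
    have "S2 f k X Y ?t a \<le> \<sigma>M * (4 * real q) / (real q / 2)"
      unfolding S2_def using RSS' den q0 sM by (intro frac_le) (auto intro: sum_nonneg)
    also have "\<dots> = 8 * \<sigma>M" using q0 by (simp add: field_simps)
    finally show ?thesis unfolding S2_def using den q0 by (auto intro!: divide_nonneg_pos sum_nonneg)
  qed
  have a1pos: "a1 > 0" unfolding a1 using al0 k1 m1 by simp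
  have a1le: "a1 \<le> 1"
  proof -
    have "real (k - 1) * real (card Xs) \<ge> 1 * 1" using k1 m1 by (intro mult_mono) auto
    then have "\<alpha> \<le> real (k - 1) * real (card Xs)" using al1 by (simp del: of_nat_diff)
    then show ?thesis unfolding a1 using k1 m1 by (simp add: divide_le_eq del: of_nat_diff)
  qed
  have R1: "R \<ge> 1" unfolding R using q0 U0 L0 by simp
  have l0: "2 * ln (R / a1) \<ge> 0" using R1 a1le a1pos by (simp add: le_divide_eq)
  have nl: "real q - real CARD('d) + 1 \<ge> 2 * (2 * ln (R / a1))" using ql dq unfolding l by simp
  have px1: "p x \<le> 1" if "x \<in> Xs" for x
  proof -
    have "p x \<le> (\<Sum>x\<in>Xs. p x)" using fin that ppos by (intro member_le_sum) auto
    then show ?thesis using psum by simp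
  qed
  have aI: "alphaI \<alpha> k (card Xs) p x \<ge> a1" if "x \<in> Xs" for x
  proof -
    have "real (k - 1) * real (card Xs) * p x \<le> real (k - 1) * real (card Xs)"
      using px1[OF that] k1 m1 by (simp add: mult_left_le)
    moreover have "real (k - 1) * real (card Xs) * p x > 0" using k1 m1 ppos that by simp
    ultimately have "\<alpha> / (real (k - 1) * real (card Xs)) \<le> \<alpha> / (real (k - 1) * real (card Xs) * p x)"
      using al0 by (intro divide_left_mono) (auto simp del: of_nat_diff)
    then show ?thesis unfolding alphaI_def a1 .
  qed
  have aII: "alphaII \<alpha> k (card Xs) \<ge> a1" unfolding alphaII_def a1 by simp
  have key: "0 \<le> S2 f k X Y ?t a * Sig f k X ?t x a + S2 f k X Y ?t b * Sig f k X ?t x b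
     \<and> 2 * phiL eps f k X ?t ar x a b * (S2 f k X Y ?t a * Sig f k X ?t x a + S2 f k X Y ?t b * Sig f k X ?t x b) < \<delta>\<^sup>2"
    if a: "a < k" and b: "b < k" and x: "x \<in> Xs" and ar: "ar \<ge> a1" for a b x ar
  proof -
    let ?V = "S2 f k X Y ?t a * Sig f k X ?t x a + S2 f k X Y ?t b * Sig f k X ?t x b"
    note sa = Sig_bds[OF a x] and sb = Sig_bds[OF b x] and Sa = S2_bds[OF a] and Sb = S2_bds[OF b]
    have V0: "?V \<ge> 0" using sa sb Sa Sb by simp
    have "S2 f k X Y ?t a * Sig f k X ?t x a \<le> 8 * \<sigma>M * (U / (c * real q))"
      using sa Sa by (intro mult_mono) auto
    moreover have "S2 f k X Y ?t b * Sig f k X ?t x b \<le> 8 * \<sigma>M * (U / (c * real q))"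
      using sb Sb by (intro mult_mono) auto
    moreover have "16 * \<sigma>M * U / (c * real q) = 8 * \<sigma>M * (U / (c * real q)) + 8 * \<sigma>M * (U / (c * real q))"
      by simp
    ultimately have V1: "?V \<le> 16 * \<sigma>M * U / (c * real q)" by linarith
    have ph: "phiL eps f k X ?t ar x a b \<le> 2 * l"
      unfolding l by (rule phi_bound[OF eps Nt[OF a] Nt[OF b]]) (use dq q0 sa sb a1pos ar l0 nl in auto)
    have "2 * phiL eps f k X ?t ar x a b * ?V \<le> 2 * (2 * l) * ?V"
      using ph V0 by (intro mult_right_mono) auto
    also have "\<dots> \<le> 2 * (2 * l) * (16 * \<sigma>M * U / (c * real q))"
      using V1 l0 l by (intro mult_left_mono) auto
    also have "\<dots> = 64 * \<sigma>M * U * l / (c * real q)" by simp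
    also have "\<dots> < \<delta>\<^sup>2" using qs cq by (simp add: divide_less_eq mult_ac)
    finally show ?thesis using V0 by simp
  qed
  let ?pi = "\<lambda>x. pihat f k X Y ?t x"
  have pis: "?pi x < k \<and> (\<forall>b<k. f x \<bullet> betahat f k X Y ?t b \<le> f x \<bullet> betahat f k X Y ?t (?pi x))" for x
    by (rule pihat_spec[OF k0])
  have rL: "rL eps f Xs \<alpha> k X Y ?t x \<le> \<delta>" if x: "x \<in> Xs" for x
  proof -
    let ?W = "{wL eps f Xs \<alpha> k X Y ?t x (?pi x) a | a. a < k \<and> a \<noteq> ?pi x}"
    have finW: "finite ?W" by simp
    have neW: "?W \<noteq> {}"
    proof -
      have "\<exists>a<k. a \<noteq> ?pi x" using k2 by (metis One_nat_def less_2_cases_iff less_le_trans not_less_eq_eq)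
      then show ?thesis by auto
    qed
    have "w \<le> \<delta>" if "w \<in> ?W" for w
    proof -
      from that obtain b where b: "b < k" "b \<noteq> ?pi x" "w = wL eps f Xs \<alpha> k X Y ?t x (?pi x) b" by auto
      have kb: "2 * phiL eps f k X ?t (alphaII \<alpha> k (card Xs)) x (?pi x) b *
          (S2 f k X Y ?t (?pi x) * Sig f k X ?t x (?pi x) + S2 f k X Y ?t b * Sig f k X ?t x b) < \<delta>\<^sup>2"
        using key[OF _ b(1) x aII] pis by blast
      have sq: "sqrt (2 * phiL eps f k X ?t (alphaII \<alpha> k (card Xs)) x (?pi x) b *
          (S2 f k X Y ?t (?pi x) * Sig f k X ?t x (?pi x) + S2 f k X Y ?t b * Sig f k X ?t x b)) < \<delta>"
        using real_sqrt_less_mono[OF kb] delta by simp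
      have diff: "f x \<bullet> betahat f k X Y ?t (?pi x) - f x \<bullet> betahat f k X Y ?t b \<ge> 0" using pis b by auto
      show "w \<le> \<delta>" unfolding b(3) wL_def using sq diff delta by simp
    qed
    then show ?thesis unfolding rL_def using finW neW by (simp add: Max_le_iff)
  qed
  show "stopII eps f Xs p \<alpha> \<delta> k X Y ?t"
  proof -
    have "(\<Sum>x\<in>Xs. p x * rL eps f Xs \<alpha> k X Y ?t x) \<le> (\<Sum>x\<in>Xs. p x * \<delta>)"
      using rL ppos by (intro sum_mono mult_left_mono) (auto simp: less_imp_le)
    also have "\<dots> = \<delta>" using psum by (simp add: sum_distrib_right[symmetric])
    finally show ?thesis unfolding stopII_def .
  qed
  assume S2nz: "\<forall>a<k. S2 f k X Y ?t a \<noteq> 0"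
  show "stopI eps f Xs p \<alpha> \<delta> k X Y ?t" unfolding stopI_def
  proof (intro ballI allI impI)
    fix x b assume x: "x \<in> Xs" and b: "b < k" and bn: "b \<noteq> ?pi x"
    let ?a = "?pi x"
    have a: "?a < k" using pis by blast
    let ?V = "S2 f k X Y ?t ?a * Sig f k X ?t x ?a + S2 f k X Y ?t b * Sig f k X ?t x b"
    let ?ph = "phiL eps f k X ?t (alphaI \<alpha> k (card Xs) p x) x ?a b"
    have kb: "2 * ?ph * ?V < \<delta>\<^sup>2" using key[OF a b x aI[OF x]] by blast
    have Vpos: "?V > 0"
    proof -
      have "S2 f k X Y ?t ?a > 0" using S2_bds[OF a] S2nz a by (simp add: order_le_less)
      moreover have "Sig f k X ?t x ?a > 0" using Sig_bds[OF a x] by simp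
      moreover have "S2 f k X Y ?t b * Sig f k X ?t x b \<ge> 0" using S2_bds[OF b] Sig_bds[OF b x] by simp
      ultimately show ?thesis by (simp add: add_pos_nonneg)
    qed
    have diff: "f x \<bullet> betahat f k X Y ?t ?a - f x \<bullet> betahat f k X Y ?t b \<ge> 0" using pis b by auto
    have num: "(f x \<bullet> betahat f k X Y ?t ?a - f x \<bullet> betahat f k X Y ?t b + \<delta>)\<^sup>2 \<ge> \<delta>\<^sup>2"
      using diff delta by (intro power_mono) auto
    have "?ph < \<delta>\<^sup>2 / (2 * ?V)" using kb Vpos by (simp add: field_simps)
    also have "\<dots> \<le> (f x \<bullet> betahat f k X Y ?t ?a - f x \<bullet> betahat f k X Y ?t b + \<delta>)\<^sup>2 / (2 * ?V)"
      using num Vpos by (intro divide_right_mono) auto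
    finally show "Ztil f k X Y x ?t \<delta> ?a b > ?ph" unfolding Ztil_def .
  qed
qed



abbreviation "NZ \<equiv> density lborel std_normal_density"

lemma NZ_prob: "prob_space NZ" by (rule prob_space_normal_density) simp

lemma iid_basic:
  assumes "iid_model M Ps W"
  shows "prob_space M" "\<And>s. W s \<in> measurable M (sample_law Ps)"
    "prob_space.indep_vars M (\<lambda>_. sample_law Ps) W UNIV"
    "\<And>s. distr M (sample_law Ps) (W s) = sample_law Ps"
proof -
  show pM: "prob_space M" using assms unfolding iid_model_def by simp
  show ind: "prob_space.indep_vars M (\<lambda>_. sample_law Ps) W UNIV" using assms unfolding iid_model_def by simp
  show "W s \<in> measurable M (sample_law Ps)" for s
    using ind unfolding prob_space.indep_vars_def[OF pM] by auto
  show "distr M (sample_law Ps) (W s) = sample_law Ps" for s using assms unfolding iid_model_def by simp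
qed

lemma nn_int_W:
  assumes iid: "iid_model M Ps W" and g: "g \<in> borel_measurable (sample_law Ps)"
  shows "(\<integral>\<^sup>+\<omega>. g (W s \<omega>) \<partial>M) = (\<integral>\<^sup>+y. g y \<partial>sample_law Ps)"
proof -
  have "(\<integral>\<^sup>+y. g y \<partial>sample_law Ps) = (\<integral>\<^sup>+y. g y \<partial>distr M (sample_law Ps) (W s))"
    using iid_basic(4)[OF iid] by simp
  also have "\<dots> = (\<integral>\<^sup>+\<omega>. g (W s \<omega>) \<partial>M)"
    by (rule nn_integral_distr[OF iid_basic(2)[OF iid]]) (use g in simp)
  finally show ?thesis by simp
qed

lemma SL_fst:
  fixes h :: "'c \<Rightarrow> ennreal"
  shows "(\<integral>\<^sup>+y. h (fst y) \<partial>sample_law Ps) = (\<integral>\<^sup>+x. h x \<partial>Ps)"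
proof -
  interpret N: prob_space NZ by (rule NZ_prob)
  have m: "(\<lambda>y. h (fst y)) \<in> borel_measurable (measure_pmf Ps \<Otimes>\<^sub>M NZ)"
    by (rule measurable_compose[OF measurable_fst]) simp
  have "(\<integral>\<^sup>+y. h (fst y) \<partial>sample_law Ps) = (\<integral>\<^sup>+ x. \<integral>\<^sup>+ y. h (fst (x, y)) \<partial>NZ \<partial>Ps)"
    unfolding sample_law_def using N.nn_integral_fst[OF m] by simp
  also have "\<dots> = (\<integral>\<^sup>+x. h x \<partial>Ps)" using N.emeasure_space_1 by simp
  finally show ?thesis .
qed

lemma SL_snd:
  fixes h :: "real \<Rightarrow> ennreal"
  assumes h: "h \<in> borel_measurable borel"
  shows "(\<integral>\<^sup>+y. h (snd y) \<partial>sample_law Ps) = (\<integral>\<^sup>+z. h z \<partial>NZ)"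
proof -
  interpret N: prob_space NZ by (rule NZ_prob)
  interpret P: pair_sigma_finite "measure_pmf Ps" NZ
    by (intro pair_sigma_finite.intro) (auto intro: prob_space_imp_sigma_finite N.prob_space_axioms measure_pmf.prob_space_axioms)
  have m: "(\<lambda>y. h (snd y)) \<in> borel_measurable (measure_pmf Ps \<Otimes>\<^sub>M NZ)"
    using h by measurable
  have "(\<integral>\<^sup>+y. h (snd y) \<partial>sample_law Ps) = (\<integral>\<^sup>+ y. \<integral>\<^sup>+ x. h (snd (x, y)) \<partial>Ps \<partial>NZ)"
    unfolding sample_law_def using P.nn_integral_snd[OF m] by simp
  also have "\<dots> = (\<integral>\<^sup>+z. h z \<partial>NZ)" by (simp add: measure_pmf.emeasure_space_1)
  finally show ?thesis .
qed

lemma NZ_mgf: "(\<integral>\<^sup>+z. ennreal (exp (z\<^sup>2 / 4)) \<partial>NZ) = ennreal (sqrt 2)"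
proof -
  have "(\<integral>\<^sup>+z. ennreal (exp (z\<^sup>2 / 4)) \<partial>NZ) = (\<integral>\<^sup>+z. ennreal (std_normal_density z) * ennreal (exp (z\<^sup>2 / 4)) \<partial>lborel)"
    by (subst nn_integral_density) auto
  also have "\<dots> = (\<integral>\<^sup>+z. ennreal (sqrt 2) * ennreal (normal_density 0 (sqrt 2) z) \<partial>lborel)"
  proof (intro nn_integral_cong)
    fix z :: real
    have "std_normal_density z * exp (z\<^sup>2 / 4) = sqrt 2 * normal_density 0 (sqrt 2) z"
    proof -
      have e: "exp (- z\<^sup>2 / 2) * exp (z\<^sup>2 / 4) = exp (- z\<^sup>2 / 4)" by (simp add: exp_add[symmetric])
      have s: "sqrt (2 * pi * (sqrt 2)\<^sup>2) = sqrt 2 * sqrt (2 * pi)"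
        by (simp add: real_sqrt_mult[symmetric] mult_ac)
      show ?thesis unfolding std_normal_density_def normal_density_def s
        using e by (simp add: field_simps)
    qed
    then show "ennreal (std_normal_density z) * ennreal (exp (z\<^sup>2 / 4)) = ennreal (sqrt 2) * ennreal (normal_density 0 (sqrt 2) z)"
      by (simp add: ennreal_mult[symmetric])
  qed
  also have "\<dots> = ennreal (sqrt 2) * (\<integral>\<^sup>+z. ennreal (normal_density 0 (sqrt 2) z) \<partial>lborel)"
    by (rule nn_integral_cmult) simp
  also have "(\<integral>\<^sup>+z. ennreal (normal_density 0 (sqrt 2) z) \<partial>lborel) = 1"
  proof -
    interpret P2: prob_space "density lborel (normal_density 0 (sqrt 2))" by (rule prob_space_normal_density) simp
    have "emeasure (density lborel (normal_density 0 (sqrt 2))) UNIV = 1"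
      using P2.emeasure_space_1 by simp
    then show ?thesis by (simp add: emeasure_density)
  qed
  finally show ?thesis by simp
qed

lemma Ps_mgf:
  assumes fin: "finite (set_pmf Ps)"
  shows "(\<integral>\<^sup>+x. ennreal (exp (- indicator {x0} x)) \<partial>Ps) \<le> ennreal (exp (- (1 - exp (-1)) * pmf Ps x0))"
proof -
  let ?S = "set_pmf Ps"
  have "(\<integral>\<^sup>+x. ennreal (exp (- indicator {x0} x)) \<partial>Ps) = (\<Sum>x\<in>?S. ennreal (exp (- indicator {x0} x)) * pmf Ps x)"
    by (rule nn_integral_measure_pmf_finite[OF fin]) simp
  also have "\<dots> = ennreal (\<Sum>x\<in>?S. exp (- indicator {x0} x) * pmf Ps x)"
    by (simp add: ennreal_mult[symmetric] sum_ennreal)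
  also have "(\<Sum>x\<in>?S. exp (- indicator {x0} x) * pmf Ps x) = (\<Sum>x\<in>?S. pmf Ps x - (1 - exp (-1)) * (indicator {x0} x * pmf Ps x))"
    by (intro sum.cong refl) (auto simp: indicator_def algebra_simps)
  also have "\<dots> = (\<Sum>x\<in>?S. pmf Ps x) - (1 - exp (-1)) * (\<Sum>x\<in>?S. indicator {x0} x * pmf Ps x)"
    by (simp add: sum_subtractf sum_distrib_left)
  also have "(\<Sum>x\<in>?S. pmf Ps x) = 1" using sum_pmf_eq_1[OF fin] by simp
  also have "(\<Sum>x\<in>?S. indicator {x0} x * pmf Ps x) = pmf Ps x0"
  proof (cases "x0 \<in> ?S")
    case True
    then show ?thesis using fin by (simp add: indicator_def sum.delta' if_distrib[of "\<lambda>u. u * _"] cong: if_cong)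
  next
    case False
    then have "pmf Ps x0 = 0" by (simp add: set_pmf_eq)
    moreover have "(\<Sum>x\<in>?S. indicator {x0} x * pmf Ps x) = 0" using False by (intro sum.neutral) (auto simp: indicator_def)
    ultimately show ?thesis by simp
  qed
  also have "1 - (1 - exp (-1)) * pmf Ps x0 \<le> exp (- (1 - exp (-1)) * pmf Ps x0)"
    using exp_ge_add_one_self[of "- (1 - exp (-1)) * pmf Ps x0"] by (simp only: diff_conv_add_uminus mult_minus_left)
  finally show ?thesis by (simp add: ennreal_leI)
qed



lemma e_gt: "exp (1::real) \<ge> 27/10"
proof -
  have "- (exp 1 - 5837465777 / 2147483648) \<le> (inverse(2 ^ 32)::real)" by (rule abs_le_D2[OF e_approx_32])
  then show ?thesis by simp
qed

lemma sqrt2_le: "sqrt 2 \<le> exp (1/2::real)"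
proof -
  have "(exp (1/2::real))\<^sup>2 = exp 1" by (simp add: power2_eq_square exp_add[symmetric])
  then have "sqrt ((exp (1/2::real))\<^sup>2) \<ge> sqrt 2" using e_gt by simp
  then show ?thesis by simp
qed

lemma W_meas_comp:
  assumes iid: "iid_model M Ps W" and g: "g \<in> measurable (sample_law Ps) N"
  shows "(\<lambda>\<omega>. g (W s \<omega>)) \<in> measurable M N"
  using measurable_compose[OF iid_basic(2)[OF iid] g] .

lemma fst_meas: "(\<lambda>y. h (fst y)) \<in> borel_measurable (sample_law Ps)"
  unfolding sample_law_def by (rule measurable_compose[OF measurable_fst]) simp

lemma snd_meas: "h \<in> borel_measurable borel \<Longrightarrow> (\<lambda>y. h (snd y)) \<in> borel_measurable (sample_law Ps)"
  unfolding sample_law_def by (rule measurable_compose[OF measurable_snd]) (simp add: measurable_density_eq1 cong: measurable_cong_sets)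

lemma indep_prod_W:
  assumes iid: "iid_model M Ps W" and fin: "finite J"
    and g: "g \<in> borel_measurable (sample_law Ps)"
  shows "(\<integral>\<^sup>+\<omega>. (\<Prod>s\<in>J. ennreal (g (W s \<omega>))) \<partial>M) = (\<integral>\<^sup>+y. ennreal (g y) \<partial>sample_law Ps) ^ card J"
proof -
  interpret prob_space M by (rule iid_basic(1)[OF iid])
  have ind: "indep_vars (\<lambda>_. sample_law Ps) W J"
    using indep_vars_subset[OF iid_basic(3)[OF iid]] by simp
  have ind2: "indep_vars (\<lambda>_. borel) (\<lambda>s \<omega>. ennreal (g (W s \<omega>))) J"
    by (rule indep_vars_compose2[OF ind]) (use g in measurable)
  have "(\<integral>\<^sup>+\<omega>. (\<Prod>s\<in>J. ennreal (g (W s \<omega>))) \<partial>M) = (\<Prod>s\<in>J. \<integral>\<^sup>+\<omega>. ennreal (g (W s \<omega>)) \<partial>M)"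
    by (rule indep_vars_nn_integral[OF fin ind2]) simp
  also have "\<dots> = (\<Prod>s\<in>J. \<integral>\<^sup>+y. ennreal (g y) \<partial>sample_law Ps)"
    by (intro prod.cong refl nn_int_W[OF iid]) (use g in measurable)
  finally show ?thesis by simp
qed

lemma chi_tail:
  assumes iid: "iid_model M Ps W" and fin: "finite J"
  shows "emeasure M {\<omega>\<in>space M. (\<Sum>s\<in>J. (snd (W s \<omega>))\<^sup>2) \<ge> 4 * real (card J)}
          \<le> ennreal (exp (- real (card J) / 2))"
proof -
  interpret prob_space M by (rule iid_basic(1)[OF iid])
  let ?f = "\<lambda>\<omega>. (\<Sum>s\<in>J. (snd (W s \<omega>))\<^sup>2)"
  have mf: "?f \<in> borel_measurable M"
    by (intro borel_measurable_sum W_meas_comp[OF iid] snd_meas) auto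
  have "emeasure M {\<omega>\<in>space M. ?f \<omega> \<ge> 4 * real (card J)}
      \<le> ennreal (exp (- (1/4) * (4 * real (card J)))) * (\<integral>\<^sup>+\<omega>. ennreal (exp ((1/4) * ?f \<omega>)) * indicator (space M) \<omega> \<partial>M)"
    by (rule Chernoff_ineq_nn_integral_ge) (use mf in auto)
  also have "(\<integral>\<^sup>+\<omega>. ennreal (exp ((1/4) * ?f \<omega>)) * indicator (space M) \<omega> \<partial>M)
      = (\<integral>\<^sup>+\<omega>. (\<Prod>s\<in>J. ennreal (exp ((snd (W s \<omega>))\<^sup>2 / 4))) \<partial>M)"
    by (intro nn_integral_cong) (simp add: sum_distrib_left exp_sum fin prod_ennreal)
  also have "\<dots> = (\<integral>\<^sup>+y. ennreal (exp ((snd y)\<^sup>2 / 4)) \<partial>sample_law Ps) ^ card J"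
    by (rule indep_prod_W[OF iid fin]) (rule snd_meas, simp)
  also have "(\<integral>\<^sup>+y. ennreal (exp ((snd y)\<^sup>2 / 4)) \<partial>sample_law Ps) = ennreal (sqrt 2)"
    using SL_snd[of "\<lambda>z. ennreal (exp (z\<^sup>2 / 4))" Ps] NZ_mgf by simp
  also have "ennreal (exp (- (1 / 4) * (4 * real (card J)))) * ennreal (sqrt 2) ^ card J
       = ennreal ((sqrt 2 * exp (-1)) ^ card J)"
    by (simp add: ennreal_power ennreal_mult[symmetric] power_mult_distrib exp_of_nat_mult[symmetric] mult_ac)
  also have "\<dots> \<le> ennreal ((exp (-1/2)) ^ card J)"
  proof (intro ennreal_leI power_mono)
    have "sqrt 2 * exp (-1) \<le> exp (1/2) * exp (-1)" using sqrt2_le by (intro mult_right_mono) auto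
    also have "\<dots> = exp (-1/2)" by (simp add: exp_add[symmetric])
    finally show "sqrt 2 * exp (-1) \<le> exp (-1/2)" .
  qed simp
  also have "(exp (-1/2::real)) ^ card J = exp (- real (card J) / 2)"
    by (simp add: exp_of_nat_mult[symmetric])
  finally show ?thesis .
qed

lemma count_tail:
  assumes iid: "iid_model M Ps W" and fin: "finite J" and finS: "finite (set_pmf Ps)"
  shows "emeasure M {\<omega>\<in>space M. (\<Sum>s\<in>J. indicator {x0} (fst (W s \<omega>))) \<le> real (card J) * pmf Ps x0 / 2}
          \<le> ennreal (exp (- real (card J) * pmf Ps x0 / 10))"
proof -
  interpret prob_space M by (rule iid_basic(1)[OF iid])
  let ?f = "\<lambda>\<omega>. (\<Sum>s\<in>J. indicator {x0} (fst (W s \<omega>)) :: real)"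
  let ?p = "pmf Ps x0"
  have mf: "?f \<in> borel_measurable M"
    by (intro borel_measurable_sum W_meas_comp[OF iid] fst_meas)
  have "emeasure M {\<omega>\<in>space M. ?f \<omega> \<le> real (card J) * ?p / 2}
      \<le> ennreal (exp (1 * (real (card J) * ?p / 2))) * (\<integral>\<^sup>+\<omega>. ennreal (exp (- 1 * ?f \<omega>)) * indicator (space M) \<omega> \<partial>M)"
    by (rule Chernoff_ineq_nn_integral_le) (use mf in auto)
  also have "(\<integral>\<^sup>+\<omega>. ennreal (exp (- 1 * ?f \<omega>)) * indicator (space M) \<omega> \<partial>M)
      = (\<integral>\<^sup>+\<omega>. (\<Prod>s\<in>J. ennreal (exp (- indicator {x0} (fst (W s \<omega>))))) \<partial>M)"
    by (intro nn_integral_cong) (simp add: exp_sum[symmetric] fin prod_ennreal sum_negf)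
  also have "\<dots> = (\<integral>\<^sup>+y. ennreal (exp (- indicator {x0} (fst y))) \<partial>sample_law Ps) ^ card J"
    by (rule indep_prod_W[OF iid fin]) (rule fst_meas)
  also have "(\<integral>\<^sup>+y. ennreal (exp (- indicator {x0} (fst y))) \<partial>sample_law Ps)
        = (\<integral>\<^sup>+x. ennreal (exp (- indicator {x0} x)) \<partial>Ps)"
    by (rule SL_fst)
  finally have 1: "emeasure M {\<omega>\<in>space M. ?f \<omega> \<le> real (card J) * ?p / 2}
      \<le> ennreal (exp (real (card J) * ?p / 2)) * (\<integral>\<^sup>+x. ennreal (exp (- indicator {x0} x)) \<partial>Ps) ^ card J"
    by simp
  also have "\<dots> \<le> ennreal (exp (real (card J) * ?p / 2)) * ennreal (exp (- (1 - exp (-1)) * ?p)) ^ card J"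
    by (intro mult_left_mono power_mono Ps_mgf[OF finS]) auto
  also have "\<dots> = ennreal (exp (real (card J) * ?p / 2) * exp (- (1 - exp (-1)) * ?p) ^ card J)"
    by (simp add: ennreal_power ennreal_mult[symmetric])
  also have "exp (real (card J) * ?p / 2) * exp (- (1 - exp (-1)) * ?p) ^ card J
      = exp (real (card J) * ?p * (exp (-1) - 1/2))"
    by (simp add: exp_of_nat_mult[symmetric] exp_add[symmetric] algebra_simps)
  also have "\<dots> \<le> exp (- real (card J) * ?p / 10)"
  proof -
    have "exp (-1::real) \<le> 10/27" using e_gt by (simp add: exp_minus field_simps)
    then have "exp (-1::real) - 1/2 \<le> - 1/10" by simp
    then have "real (card J) * ?p * (exp (-1) - 1/2) \<le> real (card J) * ?p * (-1/10)"
      by (intro mult_left_mono) auto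
    then show ?thesis by simp
  qed
  finally show ?thesis by (simp add: ennreal_leI)
qed

lemma Xnull:
  assumes iid: "iid_model M Ps W"
  shows "emeasure M {\<omega>\<in>space M. fst (W s \<omega>) \<notin> set_pmf Ps} = 0"
proof -
  interpret N: prob_space NZ by (rule NZ_prob)
  have A: "(- set_pmf Ps) \<times> UNIV \<in> sets (sample_law Ps)" unfolding sample_law_def by auto
  have "{\<omega>\<in>space M. fst (W s \<omega>) \<notin> set_pmf Ps} = W s -` ((- set_pmf Ps) \<times> UNIV) \<inter> space M" by (auto simp: mem_Times_iff)
  also have "emeasure M \<dots> = emeasure (distr M (sample_law Ps) (W s)) ((- set_pmf Ps) \<times> UNIV)"
    by (rule emeasure_distr[OF iid_basic(2)[OF iid] A, symmetric])
  also have "\<dots> = emeasure (sample_law Ps) ((- set_pmf Ps) \<times> UNIV)" using iid_basic(4)[OF iid] by simp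
  also have "\<dots> = emeasure Ps (- set_pmf Ps) * emeasure NZ UNIV"
    unfolding sample_law_def by (rule N.emeasure_pair_measure_Times) auto
  also have "emeasure Ps (- set_pmf Ps) = 0" by (simp add: measure_pmf.emeasure_eq_measure measure_pmf_zero_iff)
  finally show ?thesis by simp
qed



lemma resid_zero_imp:
  fixes f :: "'c \<Rightarrow> real^'d"
  assumes a: "a < k" and inv: "invertible (Dt f k X (k*r) a)"
    and rss: "(\<Sum>s\<in>samp k (k * Suc r) a. (Y s - f (X s) \<bullet> betahat f k X Y (k * Suc r) a)\<^sup>2) = 0"
  shows "Y (a + r * k) = f (X (a + r * k)) \<bullet> betahat f k X Y (k * r) a"
proof -
  let ?b = "betahat f k X Y (k * Suc r) a"
  have all0: "\<forall>s\<in>samp k (k * Suc r) a. (Y s - f (X s) \<bullet> ?b)\<^sup>2 = 0"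
    using rss by (subst (asm) sum_nonneg_eq_0_iff) (auto simp: samp_finite)
  then have fit: "Y s = f (X s) \<bullet> ?b" if "s \<in> samp k (k * Suc r) a" for s using that by auto
  have "(\<Sum>s\<in>samp k (k*r) a. Y s *\<^sub>R f (X s)) = (\<Sum>s\<in>samp k (k*r) a. (f (X s) \<bullet> ?b) *\<^sub>R f (X s))"
    using fit samp_mult_Suc[OF a] by (intro sum.cong refl) auto
  also have "\<dots> = Dt f k X (k*r) a *v ?b" by (simp add: Dt_mv)
  finally have "betahat f k X Y (k * r) a = ?b"
    unfolding betahat_def using matrix_inv_mv(2)[OF inv] by simp
  then show ?thesis using fit samp_mult_Suc[OF a] by auto
qed

lemma cramer_inv:
  fixes D :: "real^'d^'d"
  assumes "det D \<noteq> 0"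
  shows "matrix_inv D *v c = (\<chi> j. det (\<chi> i l. if l = j then c$i else D$i$l) / det D)"
proof -
  have inv: "invertible D" using assms invertible_det_nz by blast
  have "D *v (matrix_inv D *v c) = c" by (rule matrix_inv_mv(1)[OF inv])
  then show ?thesis using cramer[OF assms] by blast
qed

lemma det_meas:
  fixes F :: "'w \<Rightarrow> real^'d^'d"
  assumes "\<And>i j. (\<lambda>w. F w $ i $ j) \<in> borel_measurable N"
  shows "(\<lambda>w. det (F w)) \<in> borel_measurable N"
  unfolding det_def using assms by measurable

lemma inner_meas:
  fixes u v :: "'w \<Rightarrow> real^'d"
  assumes "\<And>i. (\<lambda>w. u w $ i) \<in> borel_measurable N" "\<And>i. (\<lambda>w. v w $ i) \<in> borel_measurable N"
  shows "(\<lambda>w. u w \<bullet> v w) \<in> borel_measurable N"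
  unfolding inner_vec_def using assms by measurable



lemma SL_prob: "prob_space (sample_law Ps)"
  unfolding sample_law_def by (rule prob_space_pair[OF measure_pmf.prob_space_axioms NZ_prob])

definition "Dw f S w = (\<Sum>s\<in>S. outer (f (fst (w s))))"
definition "Yw f \<beta> \<sigma>2 a w s = f (fst (w s)) \<bullet> \<beta> a + sqrt (\<sigma>2 a) * snd (w s)"
definition "cw f \<beta> \<sigma>2 a S w = (\<Sum>s\<in>S. Yw f \<beta> \<sigma>2 a w s *\<^sub>R f (fst (w s)))"
definition "Bw f \<beta> \<sigma>2 a S w = (\<chi> j. det (\<chi> i l. if l = j then cw f \<beta> \<sigma>2 a S w $ i else Dw f S w $ i $ l) / det (Dw f S w))"
definition "Gw f \<beta> \<sigma>2 a S s0 w = Yw f \<beta> \<sigma>2 a w s0 - f (fst (w s0)) \<bullet> Bw f \<beta> \<sigma>2 a S w"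

lemma comp_fst_meas:
  fixes h :: "'c \<Rightarrow> real"
  assumes "s \<in> I"
  shows "(\<lambda>w. h (fst (w s))) \<in> borel_measurable (PiM I (\<lambda>_. sample_law Ps))"
proof -
  have "(\<lambda>w. w s) \<in> measurable (PiM I (\<lambda>_. sample_law Ps)) (sample_law Ps)"
    using assms by (rule measurable_component_singleton)
  then show ?thesis by (rule measurable_compose) (rule fst_meas)
qed

lemma comp_snd_meas:
  assumes "s \<in> I"
  shows "(\<lambda>w. snd (w s)) \<in> borel_measurable (PiM I (\<lambda>_. sample_law Ps))"
proof -
  have "(\<lambda>w. w s) \<in> measurable (PiM I (\<lambda>_. sample_law Ps)) (sample_law Ps)"
    using assms by (rule measurable_component_singleton)
  then show ?thesis by (rule measurable_compose) (rule snd_meas[where h="\<lambda>x. x", simplified])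
qed

lemma Gw_meas:
  fixes f :: "'c \<Rightarrow> real^'d"
  assumes S: "S \<subseteq> I" and s0: "s0 \<in> I"
  shows "Gw f \<beta> \<sigma>2 a S s0 \<in> borel_measurable (PiM I (\<lambda>_. sample_law Ps))"
proof -
  let ?P = "PiM I (\<lambda>_. sample_law Ps)"
  have fm: "(\<lambda>w. f (fst (w s)) $ i) \<in> borel_measurable ?P" if "s \<in> I" for s i
    using comp_fst_meas[OF that, of "\<lambda>x. f x $ i"] .
  have Ym: "(\<lambda>w. Yw f \<beta> \<sigma>2 a w s) \<in> borel_measurable ?P" if "s \<in> I" for s
    unfolding Yw_def inner_vec_def
    using fm[OF that] comp_snd_meas[OF that] by measurable
  have Dm: "(\<lambda>w. Dw f S w $ i $ j) \<in> borel_measurable ?P" for i j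
    unfolding Dw_def outer_def sum_component
    by (intro borel_measurable_sum) (use fm S in \<open>auto intro!: borel_measurable_times\<close>)
  have cm: "(\<lambda>w. cw f \<beta> \<sigma>2 a S w $ i) \<in> borel_measurable ?P" for i
    unfolding cw_def sum_component
    by (intro borel_measurable_sum) (use fm Ym S in \<open>auto intro!: borel_measurable_times\<close>)
  have Bm: "(\<lambda>w. Bw f \<beta> \<sigma>2 a S w $ j) \<in> borel_measurable ?P" for j
  proof -
    have "(\<lambda>w. det (\<chi> i l. if l = j then cw f \<beta> \<sigma>2 a S w $ i else Dw f S w $ i $ l)) \<in> borel_measurable ?P"
      by (rule det_meas) (use cm Dm in auto)
    moreover have "(\<lambda>w. det (Dw f S w)) \<in> borel_measurable ?P" by (rule det_meas) (use Dm in auto)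
    ultimately show ?thesis unfolding Bw_def by simp
  qed
  show ?thesis unfolding Gw_def
    by (intro borel_measurable_diff Ym s0 inner_meas) (use fm[OF s0] Bm in auto)
qed

lemma Bw_cong: "(\<And>s. s \<in> S \<Longrightarrow> w s = w' s) \<Longrightarrow> Bw f \<beta> \<sigma>2 a S w = Bw f \<beta> \<sigma>2 a S w'"
proof -
  assume h: "\<And>s. s \<in> S \<Longrightarrow> w s = w' s"
  have D: "Dw f S w = Dw f S w'" unfolding Dw_def using h by (intro sum.cong) auto
  have C: "cw f \<beta> \<sigma>2 a S w = cw f \<beta> \<sigma>2 a S w'" unfolding cw_def Yw_def using h by (intro sum.cong) auto
  show ?thesis unfolding Bw_def by (simp only: D C)
qed

lemma NZ_single: "emeasure NZ {c} = 0"
proof -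
  have "emeasure NZ {c} = (\<integral>\<^sup>+x. ennreal (std_normal_density x) * indicator {c} x \<partial>lborel)"
    by (rule emeasure_density) auto
  also have "\<dots> = (\<integral>\<^sup>+x. 0 \<partial>(lborel :: real measure))"
    by (rule nn_integral_cong_AE) (use AE_lborel_singleton[of c] in \<open>auto elim!: eventually_mono\<close>)
  finally show ?thesis by simp
qed

lemma SL_line_null:
  fixes r :: "'c \<Rightarrow> real"
  assumes c: "c \<noteq> 0"
  shows "(\<integral>\<^sup>+y. indicator {y. c * snd y + r (fst y) = 0} y \<partial>sample_law Ps) = 0"
proof -
  interpret N: prob_space NZ by (rule NZ_prob)
  let ?g = "\<lambda>y. indicator {y. c * snd y + r (fst y) = 0} y :: ennreal"
  have hm: "(\<lambda>y. c * snd y + r (fst y)) \<in> borel_measurable (measure_pmf Ps \<Otimes>\<^sub>M NZ)"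
    using fst_meas[of r Ps] snd_meas[of "\<lambda>x. c * x" Ps] unfolding sample_law_def by measurable
  have gm: "?g \<in> borel_measurable (measure_pmf Ps \<Otimes>\<^sub>M NZ)"
  proof -
    have "{y. c * snd y + r (fst y) = 0} = {y \<in> space (measure_pmf Ps \<Otimes>\<^sub>M NZ). c * snd y + r (fst y) = 0}"
      by (auto simp: space_pair_measure)
    also have "\<dots> \<in> sets (measure_pmf Ps \<Otimes>\<^sub>M NZ)" using hm by measurable
    finally show ?thesis by simp
  qed
  have "(\<integral>\<^sup>+y. ?g y \<partial>sample_law Ps) = (\<integral>\<^sup>+ x. \<integral>\<^sup>+ z. ?g (x, z) \<partial>NZ \<partial>Ps)"
    unfolding sample_law_def using N.nn_integral_fst[OF gm] by simp
  also have "\<dots> = (\<integral>\<^sup>+ x. 0 \<partial>Ps)"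
  proof (intro nn_integral_cong)
    fix x
    have "(\<lambda>z. ?g (x, z)) = indicator {- r x / c}" using c by (auto simp: indicator_def field_simps)
    then have "(\<integral>\<^sup>+ z. ?g (x, z) \<partial>NZ) = emeasure NZ {- r x / c}" by simp
    then show "(\<integral>\<^sup>+ z. ?g (x, z) \<partial>NZ) = 0" using NZ_single by simp
  qed
  finally show ?thesis by simp
qed

lemma Gw_null:
  fixes f :: "'c \<Rightarrow> real^'d" and s0 :: nat
  assumes sig: "\<sigma>2 a > 0" and S: "S \<subseteq> {..<s0}"
  shows "emeasure (PiM {..s0} (\<lambda>_. sample_law Ps)) {w\<in>space (PiM {..s0} (\<lambda>_. sample_law Ps)). Gw f \<beta> \<sigma>2 a S s0 w = 0} = 0"
proof -
  interpret product_sigma_finite "\<lambda>_. sample_law Ps :: ('c \<times> real) measure"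
    by (intro product_sigma_finite.intro prob_space_imp_sigma_finite SL_prob)
  let ?P = "PiM {..s0} (\<lambda>_. sample_law Ps)"
  let ?A = "{w\<in>space ?P. Gw f \<beta> \<sigma>2 a S s0 w = 0}"
  have ins: "{..s0} = insert s0 {..<s0}" by (auto simp: le_less)
  have Gm: "Gw f \<beta> \<sigma>2 a S s0 \<in> borel_measurable ?P" by (rule Gw_meas) (use S in auto)
  have Asets: "?A \<in> sets ?P" using Gm by measurable
  have "emeasure ?P ?A = (\<integral>\<^sup>+w. indicator ?A w \<partial>?P)" using Asets by simp
  also have "\<dots> = (\<integral>\<^sup>+ x. (\<integral>\<^sup>+ y. indicator ?A (x(s0 := y)) \<partial>sample_law Ps) \<partial>PiM {..<s0} (\<lambda>_. sample_law Ps))"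
    unfolding ins by (rule product_nn_integral_insert) (use Asets ins in auto)
  also have "\<dots> = (\<integral>\<^sup>+ x. 0 \<partial>PiM {..<s0} (\<lambda>_. sample_law Ps))"
  proof (rule nn_integral_cong)
    fix x assume x: "x \<in> space (PiM {..<s0} (\<lambda>_. sample_law Ps))"
    define r where "r x0 = f x0 \<bullet> \<beta> a - f x0 \<bullet> Bw f \<beta> \<sigma>2 a S x" for x0
    have "(\<integral>\<^sup>+ y. indicator ?A (x(s0 := y)) \<partial>sample_law Ps)
        \<le> (\<integral>\<^sup>+y. indicator {y. sqrt (\<sigma>2 a) * snd y + r (fst y) = 0} y \<partial>sample_law Ps)"
    proof (rule nn_integral_mono)
      fix y
      have B: "Bw f \<beta> \<sigma>2 a S (x(s0 := y)) = Bw f \<beta> \<sigma>2 a S x" by (rule Bw_cong) (use S in auto)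
      have "Gw f \<beta> \<sigma>2 a S s0 (x(s0 := y)) = sqrt (\<sigma>2 a) * snd y + r (fst y)"
        unfolding Gw_def B r_def Yw_def by (simp add: algebra_simps)
      then show "indicator ?A (x(s0 := y)) \<le> (indicator {y. sqrt (\<sigma>2 a) * snd y + r (fst y) = 0} y :: ennreal)"
        by (auto simp: indicator_def)
    qed
    also have "\<dots> = 0" by (rule SL_line_null) (use sig in simp)
    finally show "(\<integral>\<^sup>+ y. indicator ?A (x(s0 := y)) \<partial>sample_law Ps) = 0" by simp
  qed
  finally show ?thesis by simp
qed



lemma resid_null:
  fixes f :: "'c \<Rightarrow> real^'d" and W :: "nat \<Rightarrow> 'm \<Rightarrow> 'c \<times> real"
  assumes iid: "iid_model M Ps W" and a: "a < k" and sig: "\<sigma>2 a > 0"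
  shows "\<exists>N\<in>sets M. emeasure M N = 0 \<and>
    {\<omega>\<in>space M. invertible (Dt f k (\<lambda>s. fst (W s \<omega>)) (k*r) a) \<and>
       (\<Sum>s\<in>samp k (k * Suc r) a. (obsY f \<beta> \<sigma>2 k (\<lambda>s. fst (W s \<omega>)) (\<lambda>s. snd (W s \<omega>)) s
          - f (fst (W s \<omega>)) \<bullet> betahat f k (\<lambda>s. fst (W s \<omega>)) (obsY f \<beta> \<sigma>2 k (\<lambda>s. fst (W s \<omega>)) (\<lambda>s. snd (W s \<omega>))) (k * Suc r) a)\<^sup>2) = 0} \<subseteq> N"
proof -
  interpret prob_space M by (rule iid_basic(1)[OF iid])
  define s0 where "s0 = a + r * k"
  define S where "S = samp k (k*r) a"
  let ?P = "PiM {..s0} (\<lambda>_. sample_law Ps)"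
  define Wr where "Wr \<omega> = (\<lambda>i\<in>{..s0}. W i \<omega>)" for \<omega>
  have S0: "S \<subseteq> {..<s0}" unfolding S_def s0_def samp_mult[OF a] using a by auto
  have Wm: "W i \<in> measurable M (sample_law Ps)" for i by (rule iid_basic(2)[OF iid])
  have Wrm: "Wr \<in> measurable M ?P" unfolding Wr_def by (rule measurable_restrict) (use Wm in auto)
  have Gm: "Gw f \<beta> \<sigma>2 a S s0 \<in> borel_measurable ?P" by (rule Gw_meas) (use S0 in auto)
  define N where "N = {\<omega>\<in>space M. Gw f \<beta> \<sigma>2 a S s0 (Wr \<omega>) = 0}"
  have Nsets: "N \<in> sets M" unfolding N_def using measurable_compose[OF Wrm Gm] by measurable
  have Aset: "{w\<in>space ?P. Gw f \<beta> \<sigma>2 a S s0 w = 0} \<in> sets ?P" using Gm by measurable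
  have distr_eq: "distr M ?P Wr = ?P"
  proof -
    have "indep_vars (\<lambda>_. sample_law Ps) W {..s0}"
      using indep_vars_subset[OF iid_basic(3)[OF iid]] by simp
    then have "distr M ?P Wr = (\<Pi>\<^sub>M i\<in>{..s0}. distr M (sample_law Ps) (W i))"
      unfolding Wr_def by (subst (asm) indep_vars_iff_distr_eq_PiM) (use Wm in auto)
    also have "\<dots> = ?P" using iid_basic(4)[OF iid] by simp
    finally show ?thesis .
  qed
  have "emeasure M N = emeasure (distr M ?P Wr) {w\<in>space ?P. Gw f \<beta> \<sigma>2 a S s0 w = 0}"
    unfolding N_def by (subst emeasure_distr[OF Wrm Aset]) (auto intro!: arg_cong[where f="emeasure M"] measurable_space[OF Wrm])
  also have "\<dots> = 0" unfolding distr_eq by (intro Gw_null sig S0)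
  finally have N0: "emeasure M N = 0" .
  have sub: "\<omega> \<in> N" if \<omega>: "\<omega> \<in> space M" and inv: "invertible (Dt f k (\<lambda>s. fst (W s \<omega>)) (k*r) a)"
    and rss: "(\<Sum>s\<in>samp k (k * Suc r) a. (obsY f \<beta> \<sigma>2 k (\<lambda>s. fst (W s \<omega>)) (\<lambda>s. snd (W s \<omega>)) s
          - f (fst (W s \<omega>)) \<bullet> betahat f k (\<lambda>s. fst (W s \<omega>)) (obsY f \<beta> \<sigma>2 k (\<lambda>s. fst (W s \<omega>)) (\<lambda>s. snd (W s \<omega>))) (k * Suc r) a)\<^sup>2) = 0"
    for \<omega>
  proof -
    let ?X = "\<lambda>s. fst (W s \<omega>)" and ?Z = "\<lambda>s. snd (W s \<omega>)"
    let ?Y = "obsY f \<beta> \<sigma>2 k ?X ?Z"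
    have fit: "?Y s0 = f (?X s0) \<bullet> betahat f k ?X ?Y (k * r) a"
      unfolding s0_def by (rule resid_zero_imp[OF a inv]) (use rss in simp)
    have WrS: "Wr \<omega> s = W s \<omega>" if "s \<in> S \<or> s = s0" for s using that S0 unfolding Wr_def by auto
    have actS: "act k s = a" if "s \<in> S" for s using that unfolding S_def samp_def by auto
    have act0: "act k s0 = a" unfolding s0_def act_def using a by simp
    have D: "Dw f S (Wr \<omega>) = Dt f k ?X (k*r) a" unfolding Dw_def Dt_def S_def[symmetric]
      using WrS by (intro sum.cong) auto
    have Yeq: "Yw f \<beta> \<sigma>2 a (Wr \<omega>) s = ?Y s" if "s \<in> S \<or> s = s0" for s
      using WrS[OF that] actS act0 that unfolding Yw_def obsY_def by auto
    have C: "cw f \<beta> \<sigma>2 a S (Wr \<omega>) = (\<Sum>s\<in>samp k (k*r) a. ?Y s *\<^sub>R f (?X s))"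
      unfolding cw_def S_def[symmetric] using WrS Yeq by (intro sum.cong) auto
    have det0: "det (Dt f k ?X (k*r) a) \<noteq> 0" using inv invertible_det_nz by blast
    have B: "Bw f \<beta> \<sigma>2 a S (Wr \<omega>) = betahat f k ?X ?Y (k * r) a"
      unfolding Bw_def D C betahat_def cramer_inv[OF det0] ..
    have "Gw f \<beta> \<sigma>2 a S s0 (Wr \<omega>) = 0"
      unfolding Gw_def B using Yeq[of s0] WrS[of s0] fit by simp
    then show ?thesis unfolding N_def using \<omega> by simp
  qed
  show ?thesis using Nsets N0 sub by blast
qed



lemma scaleR_mv: "(c *\<^sub>R A) *v v = c *\<^sub>R (A *v (v::real^'n))"
  by (simp add: vec_eq_iff matrix_vector_mult_def sum_distrib_left mult.assoc)

lemma quad_cont: "continuous_on S (\<lambda>v::real^'d. v \<bullet> (A *v v))"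
proof -
  have "linear ((*v) A)" by (rule matrix_vector_mul_linear)
  then have "continuous_on S ((*v) A)" by (intro linear_continuous_on) (simp add: linear_linear)
  then show ?thesis by (intro continuous_intros)
qed

lemma posdef_uniform:
  fixes E :: "real^'d^'d"
  assumes "posdef E"
  shows "\<exists>\<mu>>0. \<forall>v. v \<bullet> (E *v v) \<ge> \<mu> * (norm v)\<^sup>2"
proof -
  have ne: "sphere (0::real^'d) 1 \<noteq> {}" by simp
  obtain u where u: "u \<in> sphere 0 1" and umin: "\<forall>y\<in>sphere 0 1. u \<bullet> (E *v u) \<le> y \<bullet> (E *v y)"
    using continuous_attains_inf[OF compact_sphere ne quad_cont] by blast
  have u0: "u \<noteq> 0" using u by auto
  define \<mu> where "\<mu> = u \<bullet> (E *v u)"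
  have \<mu>0: "\<mu> > 0" using assms u0 unfolding posdef_def \<mu>_def by blast
  have "v \<bullet> (E *v v) \<ge> \<mu> * (norm v)\<^sup>2" for v
  proof (cases "v = 0")
    case True then show ?thesis by simp
  next
    case False
    define w where "w = (1 / norm v) *\<^sub>R v"
    have w: "w \<in> sphere 0 1" unfolding w_def using False by simp
    have vw: "v = norm v *\<^sub>R w" unfolding w_def using False by simp
    have "v \<bullet> (E *v v) = (norm v)\<^sup>2 * (w \<bullet> (E *v w))"
      by (subst (1 2) vw) (simp add: matrix_vector_mult_scaleR power2_eq_square)
    also have "\<dots> \<ge> (norm v)\<^sup>2 * \<mu>" using umin w unfolding \<mu>_def by (intro mult_left_mono) auto
    finally show ?thesis by (simp add: mult.commute)
  qed
  then show ?thesis using \<mu>0 by blast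
qed

lemma E_quad:
  fixes f :: "'c \<Rightarrow> real^'d"
  assumes fin: "finite (set_pmf Ps)"
  shows "v \<bullet> (measure_pmf.expectation Ps (\<lambda>x. outer (f x)) *v v) = (\<Sum>x0\<in>set_pmf Ps. pmf Ps x0 * (f x0 \<bullet> v)\<^sup>2)"
proof -
  have "measure_pmf.expectation Ps (\<lambda>x. outer (f x)) = (\<Sum>x0\<in>set_pmf Ps. pmf Ps x0 *\<^sub>R outer (f x0))"
    by (rule integral_measure_pmf[OF fin]) auto
  then show ?thesis
    by (simp add: sum_mv scaleR_mv outer_mv inner_sum_right power2_eq_square mult_ac inner_commute)
qed

lemma D_lower:
  fixes f :: "'c \<Rightarrow> real^'d"
  assumes fin: "finite (set_pmf Ps)" and mu: "\<forall>v. v \<bullet> (measure_pmf.expectation Ps (\<lambda>x. outer (f x)) *v v) \<ge> \<mu> * (norm v)\<^sup>2"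
    and cnt: "\<forall>x0\<in>set_pmf Ps. (\<Sum>s\<in>samp k t a. indicator {x0} (X s)) \<ge> real q * pmf Ps x0 / 2"
  shows "v \<bullet> (Dt f k X t a *v v) \<ge> \<mu> / 2 * real q * (norm v)\<^sup>2"
proof -
  let ?S = "samp k t a" and ?P = "set_pmf Ps"
  have "(\<Sum>x0\<in>?P. (real q * pmf Ps x0 / 2) * (f x0 \<bullet> v)\<^sup>2) \<le> (\<Sum>x0\<in>?P. (\<Sum>s\<in>?S. indicator {x0} (X s)) * (f x0 \<bullet> v)\<^sup>2)"
    using cnt by (intro sum_mono mult_right_mono) auto
  also have "\<dots> = (\<Sum>s\<in>?S. \<Sum>x0\<in>?P. indicator {x0} (X s) * (f x0 \<bullet> v)\<^sup>2)"
    by (simp add: sum_distrib_right sum.swap[of _ ?P])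
  also have "\<dots> \<le> (\<Sum>s\<in>?S. (f (X s) \<bullet> v)\<^sup>2)"
  proof (rule sum_mono)
    fix s
    have "(\<Sum>x0\<in>?P. indicator {x0} (X s) * (f x0 \<bullet> v)\<^sup>2) = (if X s \<in> ?P then (f (X s) \<bullet> v)\<^sup>2 else 0)"
      using fin by (simp add: indicator_def if_distrib[of "\<lambda>u. u * _"] sum.delta cong: if_cong)
    then show "(\<Sum>x0\<in>?P. indicator {x0} (X s) * (f x0 \<bullet> v)\<^sup>2) \<le> (f (X s) \<bullet> v)\<^sup>2" by simp
  qed
  also have "\<dots> = v \<bullet> (Dt f k X t a *v v)" by (simp add: Dt_quad_self)
  finally have 1: "(\<Sum>x0\<in>?P. (real q * pmf Ps x0 / 2) * (f x0 \<bullet> v)\<^sup>2) \<le> v \<bullet> (Dt f k X t a *v v)" .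
  have "(\<Sum>x0\<in>?P. (real q * pmf Ps x0 / 2) * (f x0 \<bullet> v)\<^sup>2) = real q / 2 * (v \<bullet> (measure_pmf.expectation Ps (\<lambda>x. outer (f x)) *v v))"
    unfolding E_quad[OF fin] by (simp add: sum_distrib_left mult_ac)
  moreover have "real q / 2 * (v \<bullet> (measure_pmf.expectation Ps (\<lambda>x. outer (f x)) *v v)) \<ge> real q / 2 * (\<mu> * (norm v)\<^sup>2)"
    using mu by (intro mult_left_mono) auto
  ultimately show ?thesis using 1 by (simp add: mult_ac)
qed



definition "cntW W k t a x0 \<omega> = (\<Sum>s\<in>samp k t a. indicator {x0} (fst (W s \<omega>)) :: real)"

lemma card_samp': "a < k \<Longrightarrow> card (samp k (k * q) a) = q"
  using card_samp_mult unfolding Nt_def by blast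

lemma E1_bound:
  assumes iid: "iid_model M Ps W" and finP: "finite (set_pmf Ps)"
    and pmin: "\<forall>x0\<in>set_pmf Ps. pmf Ps x0 \<ge> pm"
  shows "(\<Union>a\<in>{..<k}. \<Union>x0\<in>set_pmf Ps. {\<omega>\<in>space M. cntW W k (k*q) a x0 \<omega> \<le> real q * pmf Ps x0 / 2}) \<in> sets M"
    "emeasure M (\<Union>a\<in>{..<k}. \<Union>x0\<in>set_pmf Ps. {\<omega>\<in>space M. cntW W k (k*q) a x0 \<omega> \<le> real q * pmf Ps x0 / 2})
      \<le> ennreal (real k * real (card (set_pmf Ps)) * exp (- real q * pm / 10))"
proof -
  interpret prob_space M by (rule iid_basic(1)[OF iid])
  let ?A = "\<lambda>a x0. {\<omega>\<in>space M. cntW W k (k*q) a x0 \<omega> \<le> real q * pmf Ps x0 / 2}"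
  have mA: "?A a x0 \<in> sets M" for a x0
  proof -
    have "(\<lambda>\<omega>. cntW W k (k*q) a x0 \<omega>) \<in> borel_measurable M"
      unfolding cntW_def by (intro borel_measurable_sum W_meas_comp[OF iid] fst_meas)
    then show ?thesis by measurable
  qed
  have mU: "(\<Union>x0\<in>set_pmf Ps. ?A a x0) \<in> sets M" for a using mA finP by blast
  show "(\<Union>a\<in>{..<k}. \<Union>x0\<in>set_pmf Ps. ?A a x0) \<in> sets M" using mU by blast
  have one: "emeasure M (?A a x0) \<le> ennreal (exp (- real q * pm / 10))" if a: "a < k" and x0: "x0 \<in> set_pmf Ps" for a x0
  proof -
    have "emeasure M (?A a x0) \<le> ennreal (exp (- real (card (samp k (k*q) a)) * pmf Ps x0 / 10))"
      unfolding cntW_def card_samp'[OF a] using count_tail[OF iid samp_finite[of k "k*q" a] finP, of x0] card_samp'[OF a] by simp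
    also have "\<dots> \<le> ennreal (exp (- real q * pm / 10))"
      using pmin x0 unfolding card_samp'[OF a] by (intro ennreal_leI) (auto intro!: mult_left_mono)
    finally show ?thesis .
  qed
  have "emeasure M (\<Union>a\<in>{..<k}. \<Union>x0\<in>set_pmf Ps. ?A a x0) \<le> (\<Sum>a\<in>{..<k}. emeasure M (\<Union>x0\<in>set_pmf Ps. ?A a x0))"
    by (rule emeasure_subadditive_finite) (use mU in auto)
  also have "\<dots> \<le> (\<Sum>a\<in>{..<k}. \<Sum>x0\<in>set_pmf Ps. emeasure M (?A a x0))"
    by (intro sum_mono emeasure_subadditive_finite finP) (use mA in auto)
  also have "\<dots> \<le> (\<Sum>a\<in>{..<k}. \<Sum>x0\<in>set_pmf Ps. ennreal (exp (- real q * pm / 10)))"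
    by (intro sum_mono one) auto
  also have "\<dots> = ennreal (real k * real (card (set_pmf Ps)) * exp (- real q * pm / 10))"
    by (simp add: ennreal_mult ennreal_of_nat_eq_real_of_nat mult_ac)
  finally show "emeasure M (\<Union>a\<in>{..<k}. \<Union>x0\<in>set_pmf Ps. ?A a x0) \<le> ennreal (real k * real (card (set_pmf Ps)) * exp (- real q * pm / 10))" .
qed

lemma E2_bound:
  assumes iid: "iid_model M Ps W"
  shows "(\<Union>s\<in>{..<n}. {\<omega>\<in>space M. fst (W s \<omega>) \<notin> set_pmf Ps}) \<in> sets M"
    "emeasure M (\<Union>s\<in>{..<n}. {\<omega>\<in>space M. fst (W s \<omega>) \<notin> set_pmf Ps}) = 0"
proof -
  interpret prob_space M by (rule iid_basic(1)[OF iid])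
  have m: "{\<omega>\<in>space M. fst (W s \<omega>) \<notin> set_pmf Ps} \<in> sets M" for s
  proof -
    have "(\<lambda>\<omega>. indicator (- set_pmf Ps) (fst (W s \<omega>)) :: real) \<in> borel_measurable M"
      by (intro W_meas_comp[OF iid] fst_meas)
    then have "{\<omega>\<in>space M. (indicator (- set_pmf Ps) (fst (W s \<omega>)) :: real) = 1} \<in> sets M" by measurable
    also have "{\<omega>\<in>space M. (indicator (- set_pmf Ps) (fst (W s \<omega>)) :: real) = 1} = {\<omega>\<in>space M. fst (W s \<omega>) \<notin> set_pmf Ps}"
      by (auto simp: indicator_def)
    finally show ?thesis .
  qed
  show "(\<Union>s\<in>{..<n}. {\<omega>\<in>space M. fst (W s \<omega>) \<notin> set_pmf Ps}) \<in> sets M" using m by blast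
  have "emeasure M (\<Union>s\<in>{..<n}. {\<omega>\<in>space M. fst (W s \<omega>) \<notin> set_pmf Ps}) \<le> (\<Sum>s\<in>{..<n}. emeasure M {\<omega>\<in>space M. fst (W s \<omega>) \<notin> set_pmf Ps})"
    by (rule emeasure_subadditive_finite) (use m in auto)
  also have "\<dots> = 0" using Xnull[OF iid] by simp
  finally show "emeasure M (\<Union>s\<in>{..<n}. {\<omega>\<in>space M. fst (W s \<omega>) \<notin> set_pmf Ps}) = 0" by simp
qed

lemma E3_bound:
  assumes iid: "iid_model M Ps W"
  shows "(\<Union>a\<in>{..<k}. {\<omega>\<in>space M. (\<Sum>s\<in>samp k (k*q) a. (snd (W s \<omega>))\<^sup>2) \<ge> 4 * real q}) \<in> sets M"
    "emeasure M (\<Union>a\<in>{..<k}. {\<omega>\<in>space M. (\<Sum>s\<in>samp k (k*q) a. (snd (W s \<omega>))\<^sup>2) \<ge> 4 * real q})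
      \<le> ennreal (real k * exp (- real q / 2))"
proof -
  interpret prob_space M by (rule iid_basic(1)[OF iid])
  let ?A = "\<lambda>a. {\<omega>\<in>space M. (\<Sum>s\<in>samp k (k*q) a. (snd (W s \<omega>))\<^sup>2) \<ge> 4 * real q}"
  have m: "?A a \<in> sets M" for a
  proof -
    have "(\<lambda>\<omega>. (\<Sum>s\<in>samp k (k*q) a. (snd (W s \<omega>))\<^sup>2)) \<in> borel_measurable M"
      by (intro borel_measurable_sum W_meas_comp[OF iid] snd_meas) auto
    then show ?thesis by measurable
  qed
  show "(\<Union>a\<in>{..<k}. ?A a) \<in> sets M" using m by blast
  have "emeasure M (\<Union>a\<in>{..<k}. ?A a) \<le> (\<Sum>a\<in>{..<k}. emeasure M (?A a))"
    by (rule emeasure_subadditive_finite) (use m in auto)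
  also have "\<dots> \<le> (\<Sum>a\<in>{..<k}. ennreal (exp (- real q / 2)))"
  proof (intro sum_mono)
    fix a assume a: "a \<in> {..<k}"
    show "emeasure M (?A a) \<le> ennreal (exp (- real q / 2))"
      using chi_tail[OF iid samp_finite[of k "k*q" a]] card_samp'[of a k q] a by simp
  qed
  also have "\<dots> = ennreal (real k * exp (- real q / 2))" by (simp add: ennreal_mult ennreal_of_nat_eq_real_of_nat)
  finally show "emeasure M (\<Union>a\<in>{..<k}. ?A a) \<le> ennreal (real k * exp (- real q / 2))" .
qed



lemma bad_set:
  fixes f :: "'c \<Rightarrow> real^'d" and W :: "nat \<Rightarrow> 'm \<Rightarrow> 'c \<times> real"
  assumes iid: "iid_model M Ps W" and finP: "finite (set_pmf Ps)"
    and pmin: "\<forall>x0\<in>set_pmf Ps. pmf Ps x0 \<ge> pm" and pm1: "pm \<le> 1" and pm0: "pm > 0"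
    and sig: "\<forall>a<k. \<sigma>2 a > 0"
  shows "\<exists>B\<in>sets M. emeasure M B \<le> ennreal (real k * (2 * real (card (set_pmf Ps)) + 1) * exp (- real r * pm / 10)) \<and>
   (\<forall>\<omega>\<in>space M - B.
      (\<forall>a<k. \<forall>x0\<in>set_pmf Ps. cntW W k (k * Suc r) a x0 \<omega> > real (Suc r) * pmf Ps x0 / 2) \<and>
      (\<forall>a<k. \<forall>x0\<in>set_pmf Ps. cntW W k (k * r) a x0 \<omega> > real r * pmf Ps x0 / 2) \<and>
      (\<forall>s<k * Suc r. fst (W s \<omega>) \<in> set_pmf Ps) \<and>
      (\<forall>a<k. (\<Sum>s\<in>samp k (k * Suc r) a. (snd (W s \<omega>))\<^sup>2) < 4 * real (Suc r)) \<and>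
      (\<forall>a<k. invertible (Dt f k (\<lambda>s. fst (W s \<omega>)) (k*r) a) \<longrightarrow>
       (\<Sum>s\<in>samp k (k * Suc r) a. (obsY f \<beta> \<sigma>2 k (\<lambda>s. fst (W s \<omega>)) (\<lambda>s. snd (W s \<omega>)) s
          - f (fst (W s \<omega>)) \<bullet> betahat f k (\<lambda>s. fst (W s \<omega>)) (obsY f \<beta> \<sigma>2 k (\<lambda>s. fst (W s \<omega>)) (\<lambda>s. snd (W s \<omega>))) (k * Suc r) a)\<^sup>2) \<noteq> 0))"
proof -
  interpret prob_space M by (rule iid_basic(1)[OF iid])
  let ?RSS0 = "\<lambda>a. {\<omega>\<in>space M. invertible (Dt f k (\<lambda>s. fst (W s \<omega>)) (k*r) a) \<and>
       (\<Sum>s\<in>samp k (k * Suc r) a. (obsY f \<beta> \<sigma>2 k (\<lambda>s. fst (W s \<omega>)) (\<lambda>s. snd (W s \<omega>)) s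
          - f (fst (W s \<omega>)) \<bullet> betahat f k (\<lambda>s. fst (W s \<omega>)) (obsY f \<beta> \<sigma>2 k (\<lambda>s. fst (W s \<omega>)) (\<lambda>s. snd (W s \<omega>))) (k * Suc r) a)\<^sup>2) = 0}"
  have "\<forall>a. \<exists>N. a < k \<longrightarrow> N \<in> sets M \<and> emeasure M N = 0 \<and> ?RSS0 a \<subseteq> N"
  proof
    fix a show "\<exists>N. a < k \<longrightarrow> N \<in> sets M \<and> emeasure M N = 0 \<and> ?RSS0 a \<subseteq> N"
    proof (cases "a < k")
      case True
      have "\<exists>N\<in>sets M. emeasure M N = 0 \<and> ?RSS0 a \<subseteq> N"
        by (rule resid_null[OF iid True]) (use sig True in simp)
      then show ?thesis by blast
    qed auto
  qed
  from choice[OF this] obtain Nf where Nf0: "\<forall>a. a < k \<longrightarrow> Nf a \<in> sets M \<and> emeasure M (Nf a) = 0 \<and> ?RSS0 a \<subseteq> Nf a"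
    by blast
  have Nf: "Nf a \<in> sets M \<and> emeasure M (Nf a) = 0 \<and> ?RSS0 a \<subseteq> Nf a" if "a < k" for a
    using Nf0 that by blast
  define B1 where "B1 = (\<Union>a\<in>{..<k}. \<Union>x0\<in>set_pmf Ps. {\<omega>\<in>space M. cntW W k (k*Suc r) a x0 \<omega> \<le> real (Suc r) * pmf Ps x0 / 2})"
  define B1' where "B1' = (\<Union>a\<in>{..<k}. \<Union>x0\<in>set_pmf Ps. {\<omega>\<in>space M. cntW W k (k*r) a x0 \<omega> \<le> real r * pmf Ps x0 / 2})"
  define B2 where "B2 = (\<Union>s\<in>{..<k * Suc r}. {\<omega>\<in>space M. fst (W s \<omega>) \<notin> set_pmf Ps})"
  define B3 where "B3 = (\<Union>a\<in>{..<k}. {\<omega>\<in>space M. (\<Sum>s\<in>samp k (k*Suc r) a. (snd (W s \<omega>))\<^sup>2) \<ge> 4 * real (Suc r)})"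
  define B4 where "B4 = (\<Union>a\<in>{..<k}. Nf a)"
  note e1 = E1_bound[OF iid finP pmin, where k=k and q="Suc r", folded B1_def]
  note e1' = E1_bound[OF iid finP pmin, where k=k and q=r, folded B1'_def]
  note e2 = E2_bound[OF iid, of "k * Suc r", folded B2_def]
  note e3 = E3_bound[OF iid, where k=k and q="Suc r", folded B3_def]
  have s4: "B4 \<in> sets M" unfolding B4_def using Nf by auto
  have e4: "emeasure M B4 = 0"
  proof -
    have "emeasure M B4 \<le> (\<Sum>a\<in>{..<k}. emeasure M (Nf a))"
      unfolding B4_def by (rule emeasure_subadditive_finite) (use Nf in auto)
    also have "\<dots> = 0" using Nf by simp
    finally show ?thesis by simp
  qed
  define B where "B = B1 \<union> B1' \<union> B2 \<union> B3 \<union> B4"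
  have sB: "B \<in> sets M" unfolding B_def using e1(1) e1'(1) e2(1) e3(1) s4 by blast
  let ?e = "exp (- real r * pm / 10)"
  let ?m = "real (card (set_pmf Ps))"
  have le1: "exp (- real (Suc r) * pm / 10) \<le> ?e" using pm0 by (simp add: algebra_simps)
  have le3: "exp (- real (Suc r) / 2) \<le> ?e"
  proof -
    have h: "real r * pm \<le> real r" using pm1 by (simp add: mult_left_le)
    have "real r * pm / 10 \<le> real (Suc r) / 2" using h pm0 by (simp add: mult.commute)
    then show ?thesis by simp
  qed
  have "emeasure M B \<le> emeasure M B1 + emeasure M B1' + emeasure M B2 + emeasure M B3 + emeasure M B4"
  proof -
    have u: "emeasure M (X \<union> Y) \<le> emeasure M X + emeasure M Y" if "X \<in> sets M" "Y \<in> sets M" for X Y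
      using emeasure_subadditive[OF that] .
    have "emeasure M B \<le> emeasure M (B1 \<union> B1' \<union> B2 \<union> B3) + emeasure M B4"
      unfolding B_def by (rule u) (use e1(1) e1'(1) e2(1) e3(1) s4 in auto)
    also have "emeasure M (B1 \<union> B1' \<union> B2 \<union> B3) \<le> emeasure M (B1 \<union> B1' \<union> B2) + emeasure M B3"
      by (rule u) (use e1(1) e1'(1) e2(1) e3(1) in auto)
    also have "emeasure M (B1 \<union> B1' \<union> B2) \<le> emeasure M (B1 \<union> B1') + emeasure M B2"
      by (rule u) (use e1(1) e1'(1) e2(1) in auto)
    also have "emeasure M (B1 \<union> B1') \<le> emeasure M B1 + emeasure M B1'"
      by (rule u) (use e1(1) e1'(1) in auto)
    finally show ?thesis by (simp add: add_mono add.assoc)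
  qed
  also have "\<dots> \<le> ennreal (real k * ?m * ?e) + ennreal (real k * ?m * ?e) + 0 + ennreal (real k * ?e) + 0"
  proof (intro add_mono)
    show "emeasure M B1 \<le> ennreal (real k * ?m * ?e)"
      using e1(2) by (rule order_trans) (intro ennreal_leI mult_left_mono le1, auto)
    show "emeasure M B1' \<le> ennreal (real k * ?m * ?e)" using e1'(2) by simp
    show "emeasure M B2 \<le> 0" using e2(2) by simp
    show "emeasure M B3 \<le> ennreal (real k * ?e)"
      using e3(2) by (rule order_trans) (intro ennreal_leI mult_left_mono le3, auto)
    show "emeasure M B4 \<le> 0" using e4 by simp
  qed
  also have "\<dots> = ennreal (real k * (2 * ?m + 1) * ?e)"
    by (simp add: ennreal_plus[symmetric] algebra_simps del: ennreal_plus)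
  finally have bd: "emeasure M B \<le> ennreal (real k * (2 * ?m + 1) * ?e)" .
  have good: "\<forall>\<omega>\<in>space M - B.
      (\<forall>a<k. \<forall>x0\<in>set_pmf Ps. cntW W k (k * Suc r) a x0 \<omega> > real (Suc r) * pmf Ps x0 / 2) \<and>
      (\<forall>a<k. \<forall>x0\<in>set_pmf Ps. cntW W k (k * r) a x0 \<omega> > real r * pmf Ps x0 / 2) \<and>
      (\<forall>s<k * Suc r. fst (W s \<omega>) \<in> set_pmf Ps) \<and>
      (\<forall>a<k. (\<Sum>s\<in>samp k (k * Suc r) a. (snd (W s \<omega>))\<^sup>2) < 4 * real (Suc r)) \<and>
      (\<forall>a<k. invertible (Dt f k (\<lambda>s. fst (W s \<omega>)) (k*r) a) \<longrightarrow>
       (\<Sum>s\<in>samp k (k * Suc r) a. (obsY f \<beta> \<sigma>2 k (\<lambda>s. fst (W s \<omega>)) (\<lambda>s. snd (W s \<omega>)) s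
          - f (fst (W s \<omega>)) \<bullet> betahat f k (\<lambda>s. fst (W s \<omega>)) (obsY f \<beta> \<sigma>2 k (\<lambda>s. fst (W s \<omega>)) (\<lambda>s. snd (W s \<omega>))) (k * Suc r) a)\<^sup>2) \<noteq> 0)"
  proof
    fix \<omega> assume \<omega>: "\<omega> \<in> space M - B"
    then have nB: "\<omega> \<notin> B1" "\<omega> \<notin> B1'" "\<omega> \<notin> B2" "\<omega> \<notin> B3" "\<omega> \<notin> B4" "\<omega> \<in> space M" unfolding B_def by auto
    show "(\<forall>a<k. \<forall>x0\<in>set_pmf Ps. cntW W k (k * Suc r) a x0 \<omega> > real (Suc r) * pmf Ps x0 / 2) \<and>
      (\<forall>a<k. \<forall>x0\<in>set_pmf Ps. cntW W k (k * r) a x0 \<omega> > real r * pmf Ps x0 / 2) \<and>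
      (\<forall>s<k * Suc r. fst (W s \<omega>) \<in> set_pmf Ps) \<and>
      (\<forall>a<k. (\<Sum>s\<in>samp k (k * Suc r) a. (snd (W s \<omega>))\<^sup>2) < 4 * real (Suc r)) \<and>
      (\<forall>a<k. invertible (Dt f k (\<lambda>s. fst (W s \<omega>)) (k*r) a) \<longrightarrow>
       (\<Sum>s\<in>samp k (k * Suc r) a. (obsY f \<beta> \<sigma>2 k (\<lambda>s. fst (W s \<omega>)) (\<lambda>s. snd (W s \<omega>)) s
          - f (fst (W s \<omega>)) \<bullet> betahat f k (\<lambda>s. fst (W s \<omega>)) (obsY f \<beta> \<sigma>2 k (\<lambda>s. fst (W s \<omega>)) (\<lambda>s. snd (W s \<omega>))) (k * Suc r) a)\<^sup>2) \<noteq> 0)"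
    proof (intro conjI allI impI ballI)
      fix a x0 assume "a < k" "x0 \<in> set_pmf Ps"
      then show "cntW W k (k * Suc r) a x0 \<omega> > real (Suc r) * pmf Ps x0 / 2" using nB(1,6) unfolding B1_def by force
    next
      fix a x0 assume "a < k" "x0 \<in> set_pmf Ps"
      then show "cntW W k (k * r) a x0 \<omega> > real r * pmf Ps x0 / 2" using nB(2,6) unfolding B1'_def by force
    next
      fix s assume "s < k * Suc r"
      then show "fst (W s \<omega>) \<in> set_pmf Ps" using nB(3,6) unfolding B2_def by force
    next
      fix a assume "a < k"
      then show "(\<Sum>s\<in>samp k (k * Suc r) a. (snd (W s \<omega>))\<^sup>2) < 4 * real (Suc r)" using nB(4,6) unfolding B3_def by force
    next
      fix a assume a: "a < k" and inv: "invertible (Dt f k (\<lambda>s. fst (W s \<omega>)) (k*r) a)"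
      have "\<omega> \<notin> ?RSS0 a" using Nf[OF a] nB(5) a unfolding B4_def by blast
      then show "(\<Sum>s\<in>samp k (k * Suc r) a. (obsY f \<beta> \<sigma>2 k (\<lambda>s. fst (W s \<omega>)) (\<lambda>s. snd (W s \<omega>)) s
          - f (fst (W s \<omega>)) \<bullet> betahat f k (\<lambda>s. fst (W s \<omega>)) (obsY f \<beta> \<sigma>2 k (\<lambda>s. fst (W s \<omega>)) (\<lambda>s. snd (W s \<omega>))) (k * Suc r) a)\<^sup>2) \<noteq> 0"
        using inv nB(6) by auto
    qed
  qed
  show ?thesis using sB bd good by blast
qed



lemma suminf_ge_nat:
  assumes "\<forall>j<n. (g j :: ennreal) \<ge> 1"
  shows "of_nat n \<le> (\<Sum>j. g j)"
proof -
  have "of_nat n = (\<Sum>j<n. 1 :: ennreal)" by simp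
  also have "\<dots> \<le> (\<Sum>j<n. g j)" using assms by (intro sum_mono) auto
  also have "\<dots> \<le> (\<Sum>j. g j)" by (intro sum_le_suminf summableI) auto
  finally show ?thesis .
qed

lemma tail_pointwise:
  fixes \<tau> :: enat and B :: "nat \<Rightarrow> 'a set"
  assumes k: "k > 0" and H: "\<And>j. x \<notin> B (Q + j) \<Longrightarrow> \<tau> \<le> enat (k * (Q + j))"
  shows "ennreal_of_enat \<tau> \<le> of_nat (k*Q) + of_nat k * (\<Sum>j. indicator (B (Q+j)) x)"
proof (cases "\<exists>j. x \<notin> B (Q + j)")
  case True
  define j0 where "j0 = (LEAST j. x \<notin> B (Q + j))"
  have j0: "x \<notin> B (Q + j0)" unfolding j0_def using True by (rule LeastI_ex)
  have below: "x \<in> B (Q + j)" if "j < j0" for j using not_less_Least[OF that[unfolded j0_def]] by blast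
  have "ennreal_of_enat \<tau> \<le> ennreal_of_enat (enat (k * (Q + j0)))" using H[OF j0] by (simp only: ennreal_of_enat_le_iff)
  also have "\<dots> = of_nat (k*Q) + of_nat k * of_nat j0" by (simp add: algebra_simps)
  also have "of_nat j0 \<le> (\<Sum>j. indicator (B (Q+j)) x :: ennreal)"
    by (rule suminf_ge_nat) (use below in auto)
  finally show ?thesis by (simp add: add_left_mono mult_left_mono)
next
  case False
  have "of_nat n \<le> (\<Sum>j. indicator (B (Q+j)) x :: ennreal)" for n
    by (rule suminf_ge_nat) (use False in auto)
  then have "(SUP n. of_nat n :: ennreal) \<le> (\<Sum>j. indicator (B (Q+j)) x :: ennreal)" by (rule SUP_least)
  then have "(\<Sum>j. indicator (B (Q+j)) x :: ennreal) = top" unfolding ennreal_SUP_of_nat_eq_top using top_unique by blast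
  then have "of_nat k * (\<Sum>j. indicator (B (Q+j)) x :: ennreal) = top" using k by (simp add: ennreal_mult_eq_top_iff)
  then show ?thesis by simp
qed

lemma good_stop:
  fixes f :: "'c \<Rightarrow> real^'d" and X :: "nat \<Rightarrow> 'c" and Xs :: "'c set"
  assumes k2: "k \<ge> 2" and fin: "finite Xs" and ppos: "\<forall>x\<in>Xs. p x > 0" and psum: "(\<Sum>x\<in>Xs. p x) = 1"
    and PX: "set_pmf Ps \<subseteq> Xs"
    and L0: "0 < L" and LU: "L \<le> U" and fLU: "\<forall>x\<in>Xs. L \<le> (norm (f x))\<^sup>2 \<and> (norm (f x))\<^sup>2 \<le> U"
    and eps: "eps > 0" and delta: "\<delta> > 0" and al0: "0 < \<alpha>" and al1: "\<alpha> < 1"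
    and mu0: "\<mu> > 0" and mu: "\<forall>v. v \<bullet> (measure_pmf.expectation Ps (\<lambda>x. outer (f x)) *v v) \<ge> \<mu> * (norm v)\<^sup>2"
    and sig: "\<forall>a<k. 0 < \<sigma>2 a \<and> \<sigma>2 a \<le> \<sigma>M"
    and r1: "r \<ge> 1"
    and q2d: "2 * CARD('d) \<le> Suc r" and qc: "3 * U \<le> \<mu> / 2 * real (Suc r)"
    and ql: "4 * (2 * ln ((real (Suc r) * U / L + 1) / (\<alpha> / (real (k - 1) * real (card Xs))))) \<le> real (Suc r)"
    and qs: "64 * \<sigma>M * U * (2 * ln ((real (Suc r) * U / L + 1) / (\<alpha> / (real (k - 1) * real (card Xs))))) < \<delta>\<^sup>2 * (\<mu> / 2) * real (Suc r)"
    and g1: "\<forall>a<k. \<forall>x0\<in>set_pmf Ps. (\<Sum>s\<in>samp k (k * Suc r) a. indicator {x0} (X s)) > real (Suc r) * pmf Ps x0 / 2"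
    and g1': "\<forall>a<k. \<forall>x0\<in>set_pmf Ps. (\<Sum>s\<in>samp k (k * r) a. indicator {x0} (X s)) > real r * pmf Ps x0 / 2"
    and g2: "\<forall>s<k * Suc r. X s \<in> set_pmf Ps"
    and g3: "\<forall>a<k. (\<Sum>s\<in>samp k (k * Suc r) a. (Z s)\<^sup>2) < 4 * real (Suc r)"
    and g4: "\<forall>a<k. invertible (Dt f k X (k*r) a) \<longrightarrow>
       (\<Sum>s\<in>samp k (k * Suc r) a. (obsY f \<beta> \<sigma>2 k X Z s - f (X s) \<bullet> betahat f k X (obsY f \<beta> \<sigma>2 k X Z) (k * Suc r) a)\<^sup>2) \<noteq> 0"
  shows "tauI eps f Xs p \<alpha> \<delta> k X (obsY f \<beta> \<sigma>2 k X Z) \<le> enat (k * Suc r)"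
    "tauII eps f Xs p \<alpha> \<delta> k X (obsY f \<beta> \<sigma>2 k X Z) \<le> enat (k * Suc r)"
proof -
  let ?Y = "obsY f \<beta> \<sigma>2 k X Z"
  have finP: "finite (set_pmf Ps)" using PX fin by (rule finite_subset)
  have pd: "\<forall>a<k. \<forall>v. v \<bullet> (Dt f k X (k*Suc r) a *v v) \<ge> \<mu> / 2 * real (Suc r) * (norm v)\<^sup>2"
  proof (intro allI impI)
    fix a v assume a: "a < k"
    show "v \<bullet> (Dt f k X (k*Suc r) a *v v) \<ge> \<mu> / 2 * real (Suc r) * (norm v)\<^sup>2"
      by (rule D_lower[OF finP mu]) (use g1 a in \<open>auto intro: less_imp_le\<close>)
  qed
  have pd': "\<forall>a<k. \<forall>v. v \<bullet> (Dt f k X (k*r) a *v v) \<ge> \<mu> / 2 * real r * (norm v)\<^sup>2"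
  proof (intro allI impI)
    fix a v assume a: "a < k"
    show "v \<bullet> (Dt f k X (k*r) a *v v) \<ge> \<mu> / 2 * real r * (norm v)\<^sup>2"
      by (rule D_lower[OF finP mu]) (use g1' a in \<open>auto intro: less_imp_le\<close>)
  qed
  have c: "\<mu> / 2 > 0" using mu0 by simp
  note ds = det_stop[OF k2 fin ppos psum L0 LU fLU eps delta al0 al1 c pd _ _ _ q2d qc refl refl refl ql qs refl]
  have Xin: "\<forall>s<k * Suc r. X s \<in> Xs" using g2 PX by auto
  have Zb: "\<forall>a<k. (\<Sum>s\<in>samp k (k * Suc r) a. (Z s)\<^sup>2) \<le> 4 * real (Suc r)" using g3 by (simp add: less_imp_le)
  have sig': "\<forall>a<k. 0 \<le> \<sigma>2 a \<and> \<sigma>2 a \<le> \<sigma>M" using sig by (simp add: less_imp_le)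
  note ds' = ds[OF Xin Zb sig']
  have S2nz: "\<forall>a<k. S2 f k X ?Y (k * Suc r) a \<noteq> 0"
  proof (intro allI impI)
    fix a assume a: "a < k"
    have "posdef (Dt f k X (k*r) a)" unfolding posdef_def
    proof (intro allI impI)
      fix v :: "real^'d" assume "v \<noteq> 0"
      then have "\<mu> / 2 * real r * (norm v)\<^sup>2 > 0" using mu0 r1 by simp
      then show "v \<bullet> (Dt f k X (k*r) a *v v) > 0" using pd' a by (meson less_le_trans)
    qed
    then have "invertible (Dt f k X (k*r) a)" by (rule posdef_invertible)
    then have rss: "(\<Sum>s\<in>samp k (k * Suc r) a. (?Y s - f (X s) \<bullet> betahat f k X ?Y (k * Suc r) a)\<^sup>2) \<noteq> 0"
      using g4 a by blast
    have "real (Nt k (k * Suc r) a) - real CARD('d) > 0"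
      using card_samp_mult[OF a, of "Suc r"] q2d by simp
    then show "S2 f k X ?Y (k * Suc r) a \<noteq> 0" unfolding S2_def using rss by simp
  qed
  have stI: "stopI eps f Xs p \<alpha> \<delta> k X ?Y (k * Suc r)" using ds'(3) S2nz by blast
  show "tauI eps f Xs p \<alpha> \<delta> k X ?Y \<le> enat (k * Suc r)"
    unfolding tauI_def by (rule INF_lower) (use ds'(1) stI in auto)
  show "tauII eps f Xs p \<alpha> \<delta> k X ?Y \<le> enat (k * Suc r)"
    unfolding tauII_def by (rule INF_lower) (use ds'(1) ds'(2) in auto)
qed



lemma exp_pow: "exp (- real r * pm / 10) = (exp (- pm / 10)) ^ r"
  by (simp add: exp_of_nat_mult[symmetric])

lemma ET_bound:
  fixes f :: "'c \<Rightarrow> real^'d" and Xs :: "'c set" and W :: "nat \<Rightarrow> 'm \<Rightarrow> 'c \<times> real"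
  assumes k2: "k \<ge> 2" and fin: "finite Xs" and ppos: "\<forall>x\<in>Xs. p x > 0" and psum: "(\<Sum>x\<in>Xs. p x) = 1"
    and PX: "set_pmf Ps \<subseteq> Xs"
    and L0: "0 < L" and LU: "L \<le> U" and fLU: "\<forall>x\<in>Xs. L \<le> (norm (f x))\<^sup>2 \<and> (norm (f x))\<^sup>2 \<le> U"
    and eps: "eps > 0" and delta: "\<delta> > 0" and al0: "0 < \<alpha>" and al1: "\<alpha> < 1"
    and mu0: "\<mu> > 0" and mu: "\<forall>v. v \<bullet> (measure_pmf.expectation Ps (\<lambda>x. outer (f x)) *v v) \<ge> \<mu> * (norm v)\<^sup>2"
    and sig: "\<forall>a<k. 0 < \<sigma>2 a \<and> \<sigma>2 a \<le> \<sigma>M"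
    and pmin: "\<forall>x0\<in>set_pmf Ps. pmf Ps x0 \<ge> pm" and pm1: "pm \<le> 1" and pm0: "pm > 0"
    and iid: "iid_model M Ps W"
    and Q2: "Q \<ge> 2"
    and thr: "\<And>q. q \<ge> Q \<Longrightarrow> 2 * CARD('d) \<le> q \<and> 3 * U \<le> \<mu> / 2 * real q \<and>
        4 * (2 * ln ((real q * U / L + 1) / (\<alpha> / (real (k - 1) * real (card Xs))))) \<le> real q \<and>
        64 * \<sigma>M * U * (2 * ln ((real q * U / L + 1) / (\<alpha> / (real (k - 1) * real (card Xs))))) < \<delta>\<^sup>2 * (\<mu> / 2) * real q"
  shows "ETI M W eps f Xs p \<beta> \<sigma>2 \<alpha> \<delta> k \<le> ennreal (real k * real Q + real k * (real k * (2 * real (card (set_pmf Ps)) + 1)) * exp (- pm / 10) ^ (Q - 1) / (1 - exp (- pm / 10)))"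
    "ETII M W eps f Xs p \<beta> \<sigma>2 \<alpha> \<delta> k \<le> ennreal (real k * real Q + real k * (real k * (2 * real (card (set_pmf Ps)) + 1)) * exp (- pm / 10) ^ (Q - 1) / (1 - exp (- pm / 10)))"
proof -
  interpret prob_space M by (rule iid_basic(1)[OF iid])
  have finP: "finite (set_pmf Ps)" using PX fin by (rule finite_subset)
  define K0 where "K0 = real k * (2 * real (card (set_pmf Ps)) + 1)"
  define \<rho> where "\<rho> = exp (- pm / 10)"
  have \<rho>0: "0 < \<rho>" unfolding \<rho>_def by simp
  have \<rho>1: "\<rho> < 1" unfolding \<rho>_def using pm0 by simp
  have K00: "K0 \<ge> 0" unfolding K0_def by simp
  have sig0: "\<forall>a<k. \<sigma>2 a > 0" using sig by auto
  let ?X = "\<lambda>\<omega> s. fst (W s \<omega>)" and ?Z = "\<lambda>\<omega> s. snd (W s \<omega>)"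
  have "\<forall>r. \<exists>B. B \<in> sets M \<and> emeasure M B \<le> ennreal (K0 * \<rho> ^ r) \<and>
   (\<forall>\<omega>\<in>space M - B.
      (\<forall>a<k. \<forall>x0\<in>set_pmf Ps. cntW W k (k * Suc r) a x0 \<omega> > real (Suc r) * pmf Ps x0 / 2) \<and>
      (\<forall>a<k. \<forall>x0\<in>set_pmf Ps. cntW W k (k * r) a x0 \<omega> > real r * pmf Ps x0 / 2) \<and>
      (\<forall>s<k * Suc r. fst (W s \<omega>) \<in> set_pmf Ps) \<and>
      (\<forall>a<k. (\<Sum>s\<in>samp k (k * Suc r) a. (snd (W s \<omega>))\<^sup>2) < 4 * real (Suc r)) \<and>
      (\<forall>a<k. invertible (Dt f k (?X \<omega>) (k*r) a) \<longrightarrow>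
       (\<Sum>s\<in>samp k (k * Suc r) a. (obsY f \<beta> \<sigma>2 k (?X \<omega>) (?Z \<omega>) s
          - f (fst (W s \<omega>)) \<bullet> betahat f k (?X \<omega>) (obsY f \<beta> \<sigma>2 k (?X \<omega>) (?Z \<omega>)) (k * Suc r) a)\<^sup>2) \<noteq> 0))"
    apply (rule allI)
    subgoal for r
      using bad_set[OF iid finP pmin pm1 pm0 sig0, where r=r and f=f and \<beta>=\<beta>]
      unfolding K0_def \<rho>_def exp_pow by (auto simp: mult_ac)
    done
  from choice[OF this] obtain Bf where Bf: "\<And>r. Bf r \<in> sets M \<and> emeasure M (Bf r) \<le> ennreal (K0 * \<rho> ^ r) \<and>
   (\<forall>\<omega>\<in>space M - Bf r.
      (\<forall>a<k. \<forall>x0\<in>set_pmf Ps. cntW W k (k * Suc r) a x0 \<omega> > real (Suc r) * pmf Ps x0 / 2) \<and>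
      (\<forall>a<k. \<forall>x0\<in>set_pmf Ps. cntW W k (k * r) a x0 \<omega> > real r * pmf Ps x0 / 2) \<and>
      (\<forall>s<k * Suc r. fst (W s \<omega>) \<in> set_pmf Ps) \<and>
      (\<forall>a<k. (\<Sum>s\<in>samp k (k * Suc r) a. (snd (W s \<omega>))\<^sup>2) < 4 * real (Suc r)) \<and>
      (\<forall>a<k. invertible (Dt f k (?X \<omega>) (k*r) a) \<longrightarrow>
       (\<Sum>s\<in>samp k (k * Suc r) a. (obsY f \<beta> \<sigma>2 k (?X \<omega>) (?Z \<omega>) s
          - f (fst (W s \<omega>)) \<bullet> betahat f k (?X \<omega>) (obsY f \<beta> \<sigma>2 k (?X \<omega>) (?Z \<omega>)) (k * Suc r) a)\<^sup>2) \<noteq> 0))"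
    by blast
  define B where "B q = Bf (q - 1)" for q
  have stop_good: "tauI eps f Xs p \<alpha> \<delta> k (?X \<omega>) (obsY f \<beta> \<sigma>2 k (?X \<omega>) (?Z \<omega>)) \<le> enat (k * (Q + j)) \<and>
      tauII eps f Xs p \<alpha> \<delta> k (?X \<omega>) (obsY f \<beta> \<sigma>2 k (?X \<omega>) (?Z \<omega>)) \<le> enat (k * (Q + j))"
    if \<omega>: "\<omega> \<in> space M" and nB: "\<omega> \<notin> B (Q + j)" for \<omega> j
  proof -
    define r where "r = Q + j - 1"
    have qr: "Q + j = Suc r" unfolding r_def using Q2 by simp
    have r1: "r \<ge> 1" unfolding r_def using Q2 by simp
    have g: "\<omega> \<in> space M - Bf r" using \<omega> nB unfolding B_def r_def by simp
    note gg = Bf[of r, THEN conjunct2, THEN conjunct2, rule_format, OF g]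
    note th = thr[of "Suc r"]
    have thr': "2 * CARD('d) \<le> Suc r \<and> 3 * U \<le> \<mu> / 2 * real (Suc r) \<and>
        4 * (2 * ln ((real (Suc r) * U / L + 1) / (\<alpha> / (real (k - 1) * real (card Xs))))) \<le> real (Suc r) \<and>
        64 * \<sigma>M * U * (2 * ln ((real (Suc r) * U / L + 1) / (\<alpha> / (real (k - 1) * real (card Xs))))) < \<delta>\<^sup>2 * (\<mu> / 2) * real (Suc r)"
      by (rule thr) (use qr in simp)
    note gs = good_stop[OF k2 fin ppos psum PX L0 LU fLU eps delta al0 al1 mu0 mu sig r1,
        where X="?X \<omega>" and Z="?Z \<omega>" and \<beta>=\<beta>]
    have "tauI eps f Xs p \<alpha> \<delta> k (?X \<omega>) (obsY f \<beta> \<sigma>2 k (?X \<omega>) (?Z \<omega>)) \<le> enat (k * Suc r) \<and>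
      tauII eps f Xs p \<alpha> \<delta> k (?X \<omega>) (obsY f \<beta> \<sigma>2 k (?X \<omega>) (?Z \<omega>)) \<le> enat (k * Suc r)"
      using gs thr' gg unfolding cntW_def by blast
    then show ?thesis unfolding qr .
  qed
  have Bsets: "B q \<in> sets M" for q unfolding B_def using Bf by blast
  have k0: "k > 0" using k2 by simp
  have main: "(\<integral>\<^sup>+\<omega>. ennreal_of_enat (T \<omega>) \<partial>M) \<le> ennreal (real k * real Q + real k * K0 * \<rho> ^ (Q - 1) / (1 - \<rho>))"
    if T: "\<And>\<omega> j. \<omega> \<in> space M \<Longrightarrow> \<omega> \<notin> B (Q + j) \<Longrightarrow> T \<omega> \<le> enat (k * (Q + j))" for T
  proof -
    have "(\<integral>\<^sup>+\<omega>. ennreal_of_enat (T \<omega>) \<partial>M) \<le> (\<integral>\<^sup>+\<omega>. (of_nat (k*Q) + of_nat k * (\<Sum>j. indicator (B (Q+j)) \<omega>)) \<partial>M)"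
      by (rule nn_integral_mono) (rule tail_pointwise[OF k0 T])
    also have "\<dots> = (\<integral>\<^sup>+\<omega>. of_nat (k*Q) \<partial>M) + (\<integral>\<^sup>+\<omega>. of_nat k * (\<Sum>j. indicator (B (Q+j)) \<omega>) \<partial>M)"
      by (rule nn_integral_add) (use Bsets in auto)
    also have "(\<integral>\<^sup>+\<omega>. of_nat (k*Q) \<partial>M) = of_nat (k*Q)" by (simp add: emeasure_space_1)
    also have "(\<integral>\<^sup>+\<omega>. of_nat k * (\<Sum>j. indicator (B (Q+j)) \<omega>) \<partial>M) = of_nat k * (\<integral>\<^sup>+\<omega>. (\<Sum>j. indicator (B (Q+j)) \<omega>) \<partial>M)"
      by (rule nn_integral_cmult) (use Bsets in auto)
    also have "(\<integral>\<^sup>+\<omega>. (\<Sum>j. indicator (B (Q+j)) \<omega>) \<partial>M) = (\<Sum>j. emeasure M (B (Q+j)))"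
      by (subst nn_integral_suminf) (use Bsets in auto)
    also have "\<dots> \<le> (\<Sum>j. ennreal (K0 * \<rho> ^ (Q - 1) * \<rho> ^ j))"
    proof (intro suminf_le)
      fix j
      have "emeasure M (B (Q+j)) \<le> ennreal (K0 * \<rho> ^ (Q + j - 1))" unfolding B_def using Bf by blast
      also have "\<rho> ^ (Q + j - 1) = \<rho> ^ (Q - 1) * \<rho> ^ j" using Q2 by (simp add: power_add[symmetric])
      finally show "emeasure M (B (Q+j)) \<le> ennreal (K0 * \<rho> ^ (Q - 1) * \<rho> ^ j)" by (simp add: mult.assoc)
    qed auto
    also have "\<dots> = ennreal (\<Sum>j. K0 * \<rho> ^ (Q - 1) * \<rho> ^ j)"
      by (rule suminf_ennreal2) (use K00 \<rho>0 \<rho>1 in \<open>auto intro!: summable_mult summable_geometric\<close>)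
    also have "(\<Sum>j. K0 * \<rho> ^ (Q - 1) * \<rho> ^ j) = K0 * \<rho> ^ (Q - 1) / (1 - \<rho>)"
      using suminf_geometric[of \<rho>] \<rho>0 \<rho>1 suminf_mult[OF summable_geometric[of \<rho>], of "K0 * \<rho> ^ (Q - 1)"] by simp
    finally have "(\<integral>\<^sup>+\<omega>. ennreal_of_enat (T \<omega>) \<partial>M) \<le> of_nat (k*Q) + of_nat k * ennreal (K0 * \<rho> ^ (Q - 1) / (1 - \<rho>))"
      by (simp add: add_left_mono mult_left_mono)
    also have "\<dots> = ennreal (real k * real Q + real k * K0 * \<rho> ^ (Q - 1) / (1 - \<rho>))"
      using K00 \<rho>0 \<rho>1 by (simp add: ennreal_plus[symmetric] ennreal_mult[symmetric] ennreal_of_nat_eq_real_of_nat del: ennreal_plus)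
    finally show ?thesis .
  qed
  show "ETI M W eps f Xs p \<beta> \<sigma>2 \<alpha> \<delta> k \<le> ennreal (real k * real Q + real k * (real k * (2 * real (card (set_pmf Ps)) + 1)) * exp (- pm / 10) ^ (Q - 1) / (1 - exp (- pm / 10)))"
    unfolding ETI_def using main[of "\<lambda>\<omega>. tauI eps f Xs p \<alpha> \<delta> k (?X \<omega>) (obsY f \<beta> \<sigma>2 k (?X \<omega>) (?Z \<omega>))"] stop_good
    unfolding K0_def \<rho>_def by blast
  show "ETII M W eps f Xs p \<beta> \<sigma>2 \<alpha> \<delta> k \<le> ennreal (real k * real Q + real k * (real k * (2 * real (card (set_pmf Ps)) + 1)) * exp (- pm / 10) ^ (Q - 1) / (1 - exp (- pm / 10)))"
    unfolding ETII_def using main[of "\<lambda>\<omega>. tauII eps f Xs p \<alpha> \<delta> k (?X \<omega>) (obsY f \<beta> \<sigma>2 k (?X \<omega>) (?Z \<omega>))"] stop_good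
    unfolding K0_def \<rho>_def by blast
qed



lemma ln_le_2sqrt: "x > 0 \<Longrightarrow> ln x \<le> 2 * sqrt (x::real)"
proof -
  assume x: "x > 0"
  have "ln (sqrt x) \<le> sqrt x - 1" using x by (intro ln_le_minus_one) simp
  then show ?thesis using x ln_sqrt[of x] by simp
qed

lemma thr_suff:
  fixes q d :: nat
  assumes d1: "d \<ge> 1" and L0: "0 < L" and LU: "L \<le> U" and mu0: "\<mu> > 0" and delta: "\<delta> > 0" and sM: "\<sigma>M \<ge> 0"
    and a10: "0 < a1" and a11: "a1 \<le> 1"
    and A: "A = 4 + 64 * \<sigma>M * U / (\<delta>\<^sup>2 * (\<mu> / 2))" and B0: "B0 = 2 * ln (2 * U / (L * a1))"
    and q1: "real q \<ge> 64 * A\<^sup>2 + 2 * A * B0 + 1" and q2: "2 * d \<le> q" and q3: "real q \<ge> 6 * U / \<mu>"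
  shows "2 * d \<le> q \<and> 3 * U \<le> \<mu> / 2 * real q \<and>
        4 * (2 * ln ((real q * U / L + 1) / a1)) \<le> real q \<and>
        64 * \<sigma>M * U * (2 * ln ((real q * U / L + 1) / a1)) < \<delta>\<^sup>2 * (\<mu> / 2) * real q"
proof -
  have U0: "U > 0" using L0 LU by simp
  have qpos: "real q \<ge> 1" using q2 d1 by simp
  define l where "l = 2 * ln ((real q * U / L + 1) / a1)"
  have UL: "U / L \<ge> 1" using L0 LU by simp
  have qUL: "real q * U / L \<ge> 1" using qpos UL by (metis mult_ge1_I times_divide_eq_right)
  have l0: "l \<ge> 0"
  proof -
    have "a1 \<le> real q * U / L + 1" using qUL a11 by linarith
    then have "(real q * U / L + 1) / a1 \<ge> 1" using a10 by (subst le_divide_eq) simp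
    then show ?thesis unfolding l_def by simp
  qed
  have "l \<le> 2 * ln (2 * real q * U / L / a1)"
  proof -
    have e: "2 * real q * U / L = 2 * (real q * U / L)" by simp
    have "real q * U / L + 1 \<le> 2 * (real q * U / L)" using qUL by (simp only: mult_2 add_le_cancel_left)
    then have "real q * U / L + 1 \<le> 2 * real q * U / L" unfolding e .
    moreover have "0 < (real q * U / L + 1) / a1" using qUL a10 qpos U0 L0 by (intro divide_pos_pos add_pos_pos) auto
    ultimately show ?thesis
      unfolding l_def using a10 by (intro mult_left_mono ln_mono divide_right_mono) auto
  qed
  also have "2 * real q * U / L / a1 = real q * (2 * U / (L * a1))" by (simp add: field_simps)
  also have "2 * ln (real q * (2 * U / (L * a1))) = 2 * ln (real q) + B0"
  proof -
    have "2 * U / (L * a1) > 0" using U0 L0 a10 by simp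
    then have "ln (real q * (2 * U / (L * a1))) = ln (real q) + ln (2 * U / (L * a1))"
      using qpos by (intro ln_mult_pos) auto
    then show ?thesis unfolding B0 by simp
  qed
  finally have l1: "l \<le> 2 * ln (real q) + B0" .
  have A4: "A \<ge> 4" unfolding A using sM U0 mu0 delta by simp
  have B00: "B0 \<ge> 0"
  proof -
    have "L * a1 \<le> L * 1" using a11 L0 by (intro mult_left_mono) auto
    then have "L * a1 \<le> 2 * U" using LU U0 by simp
    then have "1 \<le> 2 * U / (L * a1)" using L0 a10 by (subst le_divide_eq) simp
    then show ?thesis unfolding B0 by simp
  qed
  have sq: "sqrt (real q) \<ge> 8 * A"
  proof -
    have AB: "0 \<le> 2 * A * B0" using A4 B00 by simp
    have "64 * A\<^sup>2 \<le> real q" using q1 AB by linarith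
    then have "sqrt (real q) \<ge> sqrt (64 * A\<^sup>2)" by (rule real_sqrt_le_mono)
    also have "sqrt (64 * A\<^sup>2) = 8 * A" using A4 by (simp add: real_sqrt_mult)
    finally show ?thesis .
  qed
  have "2 * A * ln (real q) \<le> 2 * A * (2 * sqrt (real q))"
    using ln_le_2sqrt[of "real q"] qpos A4 by (intro mult_left_mono) auto
  also have "\<dots> = 4 * A * sqrt (real q)" by simp
  also have "\<dots> \<le> sqrt (real q) / 2 * sqrt (real q)" using sq by (intro mult_right_mono) auto
  also have "\<dots> = real q / 2" by simp
  finally have t1: "2 * A * ln (real q) \<le> real q / 2" .
  have t2: "A * B0 < real q / 2"
  proof -
    have "0 \<le> 64 * A\<^sup>2" by simp
    moreover have "2 * A * B0 = 2 * (A * B0)" by simp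
    ultimately have "2 * (A * B0) < real q" using q1 by linarith
    then show ?thesis by simp
  qed
  have Al: "A * l < real q"
  proof -
    have "A * l \<le> A * (2 * ln (real q) + B0)" using l1 A4 by (intro mult_left_mono) auto
    also have "\<dots> = 2 * A * ln (real q) + A * B0" by (simp add: algebra_simps)
    finally show ?thesis using t1 t2 by simp
  qed
  have c1: "4 * l \<le> real q"
  proof -
    have "4 * l \<le> A * l" using A4 l0 by (intro mult_right_mono) auto
    then show ?thesis using Al by simp
  qed
  have c2: "64 * \<sigma>M * U * l < \<delta>\<^sup>2 * (\<mu> / 2) * real q"
  proof -
    have pos: "\<delta>\<^sup>2 * (\<mu> / 2) > 0" using delta mu0 by simp
    have "64 * \<sigma>M * U / (\<delta>\<^sup>2 * (\<mu> / 2)) * l \<le> A * l" unfolding A using l0 by (intro mult_right_mono) auto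
    then have "64 * \<sigma>M * U / (\<delta>\<^sup>2 * (\<mu> / 2)) * l < real q" using Al by simp
    then have "64 * \<sigma>M * U * l / (\<delta>\<^sup>2 * (\<mu> / 2)) < real q" by simp
    then show ?thesis using pos by (simp add: divide_less_eq mult.commute)
  qed
  have c3: "3 * U \<le> \<mu> / 2 * real q" using q3 mu0 by (simp add: divide_le_eq mult.commute)
  show ?thesis using q2 c1 c2 c3 unfolding l_def by simp
qed



lemma ET_T:
  fixes f :: "'c \<Rightarrow> real^'d" and Xs :: "'c set" and W :: "nat \<Rightarrow> 'm \<Rightarrow> 'c \<times> real"
  assumes k2: "k \<ge> 2" and fin: "finite Xs" and ppos: "\<forall>x\<in>Xs. p x > 0" and psum: "(\<Sum>x\<in>Xs. p x) = 1"
    and PX: "set_pmf Ps \<subseteq> Xs"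
    and L0: "0 < L" and LU: "L \<le> U" and fLU: "\<forall>x\<in>Xs. L \<le> (norm (f x))\<^sup>2 \<and> (norm (f x))\<^sup>2 \<le> U"
    and eps: "eps > 0" and delta: "\<delta> > 0" and al0: "0 < \<alpha>" and al1: "\<alpha> < 1"
    and mu0: "\<mu> > 0" and mu: "\<forall>v. v \<bullet> (measure_pmf.expectation Ps (\<lambda>x. outer (f x)) *v v) \<ge> \<mu> * (norm v)\<^sup>2"
    and sig: "\<forall>a<k. 0 < \<sigma>2 a \<and> \<sigma>2 a \<le> \<sigma>M" and sM: "\<sigma>M \<ge> 0"
    and pmin: "\<forall>x0\<in>set_pmf Ps. pmf Ps x0 \<ge> pm" and pm1: "pm \<le> 1" and pm0: "pm > 0"
    and iid: "iid_model M Ps W"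
    and T0: "T0 \<ge> 64 * (4 + 64 * \<sigma>M * U / (\<delta>\<^sup>2 * (\<mu> / 2)))\<^sup>2
        + 2 * (4 + 64 * \<sigma>M * U / (\<delta>\<^sup>2 * (\<mu> / 2))) * (2 * ln (2 * U / (L * (\<alpha> / (real (k - 1) * real (card Xs))))))
        + 1 + 2 * real CARD('d) + 6 * U / \<mu>"
    and Q2: "Q \<ge> 2" and QT: "real Q \<ge> T0"
  shows "ETI M W eps f Xs p \<beta> \<sigma>2 \<alpha> \<delta> k \<le> ennreal (real k * real Q + real k * (real k * (2 * real (card (set_pmf Ps)) + 1)) * exp (- pm / 10) ^ (Q - 1) / (1 - exp (- pm / 10)))"
    "ETII M W eps f Xs p \<beta> \<sigma>2 \<alpha> \<delta> k \<le> ennreal (real k * real Q + real k * (real k * (2 * real (card (set_pmf Ps)) + 1)) * exp (- pm / 10) ^ (Q - 1) / (1 - exp (- pm / 10)))"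
proof -
  define a1 where "a1 = \<alpha> / (real (k - 1) * real (card Xs))"
  have Xne: "Xs \<noteq> {}" using psum by auto
  have m1: "real (card Xs) \<ge> 1" using fin Xne by (simp add: Suc_le_eq card_gt_0_iff)
  have k1: "real (k - 1) \<ge> 1" using k2 by simp
  have km: "real (k - 1) * real (card Xs) \<ge> 1 * 1" using k1 m1 by (intro mult_mono) auto
  have a10: "a1 > 0" unfolding a1_def using al0 k1 m1 by simp
  have a11: "a1 \<le> 1" unfolding a1_def using al1 km by (simp add: divide_le_eq del: of_nat_diff)
  have U0: "U > 0" using L0 LU by simp
  have d1: "CARD('d) \<ge> 1" using zero_less_card_finite[where 'a='d] by linarith
  have Apos: "0 \<le> 64 * \<sigma>M * U / (\<delta>\<^sup>2 * (\<mu> / 2))" using sM U0 delta mu0 by simp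
  have thr: "2 * CARD('d) \<le> q \<and> 3 * U \<le> \<mu> / 2 * real q \<and>
        4 * (2 * ln ((real q * U / L + 1) / (\<alpha> / (real (k - 1) * real (card Xs))))) \<le> real q \<and>
        64 * \<sigma>M * U * (2 * ln ((real q * U / L + 1) / (\<alpha> / (real (k - 1) * real (card Xs))))) < \<delta>\<^sup>2 * (\<mu> / 2) * real q"
    if q: "q \<ge> Q" for q
  proof -
    have qT: "real q \<ge> T0" using QT q by linarith
    have B0pos: "0 \<le> 2 * ln (2 * U / (L * a1))"
    proof -
      have "L * a1 \<le> L * 1" using a11 L0 by (intro mult_left_mono) auto
      then have "L * a1 \<le> 2 * U" using LU U0 by simp
      then have "1 \<le> 2 * U / (L * a1)" using L0 a10 by (subst le_divide_eq) simp
      then show ?thesis by simp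
    qed
    have nn: "0 \<le> 2 * (4 + 64 * \<sigma>M * U / (\<delta>\<^sup>2 * (\<mu> / 2))) * (2 * ln (2 * U / (L * a1)))"
      using Apos B0pos by simp
    have "0 \<le> 6 * U / \<mu>" using U0 mu0 by simp
    then have q1: "real q \<ge> 64 * (4 + 64 * \<sigma>M * U / (\<delta>\<^sup>2 * (\<mu> / 2)))\<^sup>2 + 2 * (4 + 64 * \<sigma>M * U / (\<delta>\<^sup>2 * (\<mu> / 2))) * (2 * ln (2 * U / (L * a1))) + 1"
      using qT T0 unfolding a1_def by linarith
    have q2: "2 * CARD('d) \<le> q"
    proof -
      have z: "0 \<le> 64 * (4 + 64 * \<sigma>M * U / (\<delta>\<^sup>2 * (\<mu> / 2)))\<^sup>2" by simp
      have z2: "0 \<le> 6 * U / \<mu>" using U0 mu0 by simp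
      have "2 * real CARD('d) \<le> real q" using qT T0 nn z z2 unfolding a1_def by linarith
      then have "real (2 * CARD('d)) \<le> real q" by simp
      then show ?thesis by linarith
    qed
    have q3: "real q \<ge> 6 * U / \<mu>"
    proof -
      have z: "0 \<le> 64 * (4 + 64 * \<sigma>M * U / (\<delta>\<^sup>2 * (\<mu> / 2)))\<^sup>2" by simp
      have z2: "0 \<le> 2 * real CARD('d)" by simp
      show ?thesis using qT T0 nn z z2 unfolding a1_def by linarith
    qed
    show ?thesis using thr_suff[OF d1 L0 LU mu0 delta sM a10 a11 refl refl q1 q2 q3] unfolding a1_def by simp
  qed
  show "ETI M W eps f Xs p \<beta> \<sigma>2 \<alpha> \<delta> k \<le> ennreal (real k * real Q + real k * (real k * (2 * real (card (set_pmf Ps)) + 1)) * exp (- pm / 10) ^ (Q - 1) / (1 - exp (- pm / 10)))"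
    by (rule ET_bound(1)[OF k2 fin ppos psum PX L0 LU fLU eps delta al0 al1 mu0 mu sig pmin pm1 pm0 iid Q2 thr])
  show "ETII M W eps f Xs p \<beta> \<sigma>2 \<alpha> \<delta> k \<le> ennreal (real k * real Q + real k * (real k * (2 * real (card (set_pmf Ps)) + 1)) * exp (- pm / 10) ^ (Q - 1) / (1 - exp (- pm / 10)))"
    by (rule ET_bound(2)[OF k2 fin ppos psum PX L0 LU fLU eps delta al0 al1 mu0 mu sig pmin pm1 pm0 iid Q2 thr])
qed



lemma ln3: "ln (3::real) \<ge> 1"
proof -
  have "exp (1::real) \<le> 3"
  proof -
    have "exp 1 - 5837465777 / 2147483648 \<le> (inverse(2 ^ 32)::real)" by (rule abs_le_D1[OF e_approx_32])
    then show ?thesis by simp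
  qed
  then show ?thesis by (subst ln_ge_iff) auto
qed

lemma nat_ceil_le: "x \<ge> 0 \<Longrightarrow> real (nat \<lceil>x\<rceil>) \<le> x + 1"
  by linarith

lemma part1:
  fixes f :: "'c \<Rightarrow> real^'d" and Xs :: "'c set"
  assumes fin: "finite Xs" and ppos: "\<forall>x\<in>Xs. p x > 0" and psum: "(\<Sum>x\<in>Xs. p x) = 1"
    and PX: "set_pmf Ps \<subseteq> Xs"
    and L0: "0 < L" and LU: "L \<le> U" and fLU: "\<forall>x\<in>Xs. L \<le> (norm (f x))\<^sup>2 \<and> (norm (f x))\<^sup>2 \<le> U"
    and eps: "eps > 0" and delta: "\<delta> > 0"
    and mu0: "\<mu> > 0" and mu: "\<forall>v. v \<bullet> (measure_pmf.expectation Ps (\<lambda>x. outer (f x)) *v v) \<ge> \<mu> * (norm v)\<^sup>2"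
    and pmin: "\<forall>x0\<in>set_pmf Ps. pmf Ps x0 \<ge> pm" and pm1: "pm \<le> 1" and pm0: "pm > 0"
    and al0: "0 < \<alpha>" and al1: "\<alpha> < 1" and sm0: "0 < \<sigma>max"
  shows "\<exists>C K. \<forall>k\<ge>K. \<forall>(\<beta> :: nat \<Rightarrow> real^'d) (\<sigma>2 :: nat \<Rightarrow> real).
          (\<forall>a<k. 0 < \<sigma>2 a \<and> \<sigma>2 a \<le> \<sigma>max) \<longrightarrow>
          (\<forall>(M :: 'm measure) W. iid_model M Ps W \<longrightarrow>
             ETI M W eps f Xs p \<beta> \<sigma>2 \<alpha> \<delta> k \<le> ennreal (C * real k * ln (real k)) \<and>
             ETII M W eps f Xs p \<beta> \<sigma>2 \<alpha> \<delta> k \<le> ennreal (C * real k * ln (real k)))"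
proof -
  define A where "A = 4 + 64 * \<sigma>max * U / (\<delta>\<^sup>2 * (\<mu> / 2))"
  define m where "m = real (card Xs)"
  define b where "b = 2 * ln (2 * U * m / (L * \<alpha>))"
  define d where "d = real CARD('d)"
  define \<rho> where "\<rho> = exp (- pm / 10)"
  define m' where "m' = real (card (set_pmf Ps))"
  define c2 where "c2 = 64 * A\<^sup>2 + 2 * A * b + 5 + 2 * d + 6 * U / \<mu>"
  define c3 where "c3 = 4 * A + 20 / pm"
  define c4 where "c4 = (2 * m' + 1) / (1 - \<rho>)"
  have U0: "U > 0" using L0 LU by simp
  have Xne: "Xs \<noteq> {}" using psum by auto
  have m1: "m \<ge> 1" unfolding m_def using fin Xne by (simp add: Suc_le_eq card_gt_0_iff)
  have A0: "A \<ge> 0" unfolding A_def using sm0 U0 delta mu0 by simp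
  have b0: "b \<ge> 0"
  proof -
    have "L * \<alpha> \<le> U * 1" using LU al1 L0 al0 by (intro mult_mono) auto
    also have "\<dots> \<le> 2 * U * m" using m1 U0 by simp
    finally have "1 \<le> 2 * U * m / (L * \<alpha>)" using L0 al0 by (subst le_divide_eq) simp
    then show ?thesis unfolding b_def by simp
  qed
  have \<rho>0: "0 < \<rho>" and \<rho>1: "\<rho> < 1" unfolding \<rho>_def using pm0 by auto
  have c20: "c2 \<ge> 0" unfolding c2_def d_def using A0 b0 U0 mu0 by simp
  have c30: "c3 \<ge> 0" unfolding c3_def using A0 pm0 by simp
  have c40: "c4 \<ge> 0" unfolding c4_def m'_def using \<rho>1 by simp
  show ?thesis
  proof (intro exI[of _ "c2 + c3 + c4"] exI[of _ "3::nat"] allI impI conjI)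
    fix k :: nat and \<beta> :: "nat \<Rightarrow> real^'d" and \<sigma>2 :: "nat \<Rightarrow> real" and M :: "'m measure" and W
    assume k3: "3 \<le> k" and sig: "\<forall>a<k. 0 < \<sigma>2 a \<and> \<sigma>2 a \<le> \<sigma>max" and iid: "iid_model M Ps W"
    have k2: "k \<ge> 2" using k3 by simp
    have lnk: "ln (real k) \<ge> 1"
    proof -
      have "ln 3 \<le> ln (real k)" using k3 by (intro ln_mono) auto
      then show ?thesis using ln3 by simp
    qed
    have kpos: "real k > 0" using k3 by simp
    define T0 where "T0 = 64 * A\<^sup>2 + 2 * A * (2 * ln (real k) + b) + 1 + 2 * d + 6 * U / \<mu>"
    define Q where "Q = nat \<lceil>T0\<rceil> + nat \<lceil>20 * ln (real k) / pm\<rceil> + 2"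
    have T00: "T0 \<ge> 0" unfolding T0_def d_def using A0 b0 lnk U0 mu0 by simp
    have B0le: "2 * ln (2 * U / (L * (\<alpha> / (real (k - 1) * real (card Xs))))) \<le> 2 * ln (real k) + b"
    proof -
      have k1: "real (k - 1) \<ge> 1" using k2 by simp
      have e: "2 * U / (L * (\<alpha> / (real (k - 1) * real (card Xs)))) = real (k - 1) * (2 * U * m / (L * \<alpha>))"
        unfolding m_def using L0 al0 by (simp add: field_simps)
      have pos: "2 * U * m / (L * \<alpha>) > 0" using U0 m1 L0 al0 by simp
      have "ln (real (k - 1) * (2 * U * m / (L * \<alpha>))) \<le> ln (real k * (2 * U * m / (L * \<alpha>)))"
      proof (rule ln_mono)
        show "real (k - 1) * (2 * U * m / (L * \<alpha>)) \<le> real k * (2 * U * m / (L * \<alpha>))"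
          using pos by (intro mult_right_mono) auto
        show "0 < real (k - 1) * (2 * U * m / (L * \<alpha>))" using pos k1 by (intro mult_pos_pos) auto
      qed
      also have "\<dots> = ln (real k) + ln (2 * U * m / (L * \<alpha>))" by (rule ln_mult_pos[OF kpos pos])
      finally show ?thesis unfolding e b_def by simp
    qed
    have T0ok: "T0 \<ge> 64 * (4 + 64 * \<sigma>max * U / (\<delta>\<^sup>2 * (\<mu> / 2)))\<^sup>2
        + 2 * (4 + 64 * \<sigma>max * U / (\<delta>\<^sup>2 * (\<mu> / 2))) * (2 * ln (2 * U / (L * (\<alpha> / (real (k - 1) * real (card Xs))))))
        + 1 + 2 * real CARD('d) + 6 * U / \<mu>"
    proof -
      have "2 * A * (2 * ln (2 * U / (L * (\<alpha> / (real (k - 1) * real (card Xs)))))) \<le> 2 * A * (2 * ln (real k) + b)"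
        using B0le A0 by (intro mult_left_mono) auto
      then show ?thesis unfolding T0_def A_def[symmetric] d_def by simp
    qed
    have Q2: "Q \<ge> 2" unfolding Q_def by simp
    have QT: "real Q \<ge> T0" unfolding Q_def by linarith
    have sM: "\<sigma>max \<ge> 0" using sm0 by simp
    note bd = ET_T[OF k2 fin ppos psum PX L0 LU fLU eps delta al0 al1 mu0 mu sig sM pmin pm1 pm0 iid T0ok Q2 QT, where \<beta>=\<beta>]
    have rho_bound: "\<rho> ^ (Q - 1) \<le> 1 / (real k)\<^sup>2"
    proof -
      have "real (Q - 1) \<ge> 20 * ln (real k) / pm" unfolding Q_def by linarith
      then have "real (Q - 1) * pm / 10 \<ge> 2 * ln (real k)" using pm0 by (simp add: field_simps)
      then have "\<rho> ^ (Q - 1) \<le> exp (- (2 * ln (real k)))"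
        unfolding \<rho>_def exp_of_nat_mult[symmetric] by simp
      also have "exp (- (2 * ln (real k))) = 1 / (real k)\<^sup>2"
      proof -
        have "exp (2 * ln (real k)) = exp (ln (real k)) * exp (ln (real k))" by (simp add: exp_add[symmetric])
        also have "\<dots> = (real k)\<^sup>2" using kpos by (simp add: power2_eq_square)
        finally show ?thesis by (simp add: exp_minus divide_inverse)
      qed
      finally show ?thesis .
    qed
    have num: "real k * real Q + real k * (real k * (2 * m' + 1)) * \<rho> ^ (Q - 1) / (1 - \<rho>) \<le> (c2 + c3 + c4) * real k * ln (real k)"
    proof -
      have "real k * (real k * (2 * m' + 1)) * \<rho> ^ (Q - 1) \<le> real k * (real k * (2 * m' + 1)) * (1 / (real k)\<^sup>2)"
        using rho_bound unfolding m'_def by (intro mult_left_mono) auto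
      also have "\<dots> = 2 * m' + 1" using kpos by (simp add: power2_eq_square)
      finally have t: "real k * (real k * (2 * m' + 1)) * \<rho> ^ (Q - 1) / (1 - \<rho>) \<le> c4"
        unfolding c4_def using \<rho>1 by (intro divide_right_mono) auto
      have Qle: "real Q \<le> T0 + 20 * ln (real k) / pm + 4"
      proof -
        have "real (nat \<lceil>T0\<rceil>) \<le> T0 + 1" using T00 by linarith
        moreover have "real (nat \<lceil>20 * ln (real k) / pm\<rceil>) \<le> 20 * ln (real k) / pm + 1"
          using lnk pm0 by (intro nat_ceil_le) simp
        ultimately show ?thesis unfolding Q_def by simp
      qed
      have "T0 + 20 * ln (real k) / pm + 4 = c2 + c3 * ln (real k)"
        unfolding T0_def c2_def c3_def by (simp add: algebra_simps)
      then have Qle': "real Q \<le> c2 + c3 * ln (real k)" using Qle by simp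
      have "real k * real Q \<le> real k * (c2 + c3 * ln (real k))" using Qle' kpos by (intro mult_left_mono) auto
      also have "\<dots> \<le> real k * (c2 * ln (real k) + c3 * ln (real k))"
        using lnk c20 kpos by (intro mult_left_mono add_right_mono) (auto intro: mult_le_cancel_left1[THEN iffD2])
      finally have t1: "real k * real Q \<le> (c2 + c3) * real k * ln (real k)" by (simp add: algebra_simps)
      have t2: "c4 \<le> c4 * real k * ln (real k)"
      proof -
        have "1 * 1 \<le> real k * ln (real k)" using lnk k3 by (intro mult_mono) auto
        then have "c4 * 1 \<le> c4 * (real k * ln (real k))" using c40 by (intro mult_left_mono) auto
        then show ?thesis by (simp add: mult.assoc)
      qed
      show ?thesis using t t1 t2 by (simp add: algebra_simps)
    qed
    show "ETI M W eps f Xs p \<beta> \<sigma>2 \<alpha> \<delta> k \<le> ennreal ((c2 + c3 + c4) * real k * ln (real k))"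
      using bd(1) num unfolding m'_def \<rho>_def by (meson ennreal_leI order_trans)
    show "ETII M W eps f Xs p \<beta> \<sigma>2 \<alpha> \<delta> k \<le> ennreal ((c2 + c3 + c4) * real k * ln (real k))"
      using bd(2) num unfolding m'_def \<rho>_def by (meson ennreal_leI order_trans)
  qed
qed

lemma part2:
  fixes f :: "'c \<Rightarrow> real^'d" and Xs :: "'c set"
  assumes fin: "finite Xs" and ppos: "\<forall>x\<in>Xs. p x > 0" and psum: "(\<Sum>x\<in>Xs. p x) = 1"
    and PX: "set_pmf Ps \<subseteq> Xs"
    and L0: "0 < L" and LU: "L \<le> U" and fLU: "\<forall>x\<in>Xs. L \<le> (norm (f x))\<^sup>2 \<and> (norm (f x))\<^sup>2 \<le> U"
    and eps: "eps > 0" and delta: "\<delta> > 0"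
    and mu0: "\<mu> > 0" and mu: "\<forall>v. v \<bullet> (measure_pmf.expectation Ps (\<lambda>x. outer (f x)) *v v) \<ge> \<mu> * (norm v)\<^sup>2"
    and pmin: "\<forall>x0\<in>set_pmf Ps. pmf Ps x0 \<ge> pm" and pm1: "pm \<le> 1" and pm0: "pm > 0"
    and k2: "k \<ge> 2" and sig0: "\<forall>a<k. 0 < \<sigma>2 a"
  shows "\<exists>C \<alpha>0. 0 < \<alpha>0 \<and> (\<forall>\<alpha>. 0 < \<alpha> \<and> \<alpha> \<le> \<alpha>0 \<longrightarrow>
          (\<forall>(M :: 'm measure) W. iid_model M Ps W \<longrightarrow>
             ETI M W eps f Xs p \<beta> \<sigma>2 \<alpha> \<delta> k \<le> ennreal (C * ln (1 / \<alpha>)) \<and>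
             ETII M W eps f Xs p \<beta> \<sigma>2 \<alpha> \<delta> k \<le> ennreal (C * ln (1 / \<alpha>))))"
proof -
  define \<sigma>M where "\<sigma>M = Max (\<sigma>2 ` {..<k})"
  have kpos: "real k > 0" using k2 by simp
  have sig: "\<forall>a<k. 0 < \<sigma>2 a \<and> \<sigma>2 a \<le> \<sigma>M" unfolding \<sigma>M_def using sig0 by auto
  have sM: "\<sigma>M \<ge> 0"
  proof -
    have "0 < k" using k2 by simp
    then have "0 < \<sigma>2 0 \<and> \<sigma>2 0 \<le> \<sigma>M" using sig by blast
    then show ?thesis by simp
  qed
  define A where "A = 4 + 64 * \<sigma>M * U / (\<delta>\<^sup>2 * (\<mu> / 2))"
  define m where "m = real (card Xs)"
  define b where "b = 2 * ln (2 * U * real (k - 1) * m / L)"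
  define d where "d = real CARD('d)"
  define \<rho> where "\<rho> = exp (- pm / 10)"
  define m' where "m' = real (card (set_pmf Ps))"
  define K0 where "K0 = real k * (2 * m' + 1)"
  define c5 where "c5 = 64 * A\<^sup>2 + 2 * A * b + 4 + 2 * d + 6 * U / \<mu>"
  define C where "C = real k * c5 + 4 * real k * A + real k * K0 / (1 - \<rho>)"
  have U0: "U > 0" using L0 LU by simp
  have Xne: "Xs \<noteq> {}" using psum by auto
  have m1: "m \<ge> 1" unfolding m_def using fin Xne by (simp add: Suc_le_eq card_gt_0_iff)
  have k1: "real (k - 1) \<ge> 1" using k2 by simp
  have A0: "A \<ge> 0" unfolding A_def using sM U0 delta mu0 by simp
  have b0: "b \<ge> 0"
  proof -
    have "L * 1 \<le> U * 1" using LU by simp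
    also have "\<dots> \<le> 2 * U * real (k - 1) * m"
    proof -
      have "1 * 1 \<le> real (k - 1) * m" using k1 m1 by (intro mult_mono) auto
      then have "1 \<le> 2 * (real (k - 1) * m)" by (simp del: of_nat_diff)
      then have "U * 1 \<le> U * (2 * (real (k - 1) * m))" by (rule mult_left_mono[OF _ less_imp_le[OF U0]])
      then show ?thesis by (simp add: mult_ac del: of_nat_diff)
    qed
    finally have "1 \<le> 2 * U * real (k - 1) * m / L" using L0 by (subst le_divide_eq) (simp del: of_nat_diff)
    then show ?thesis unfolding b_def by (simp del: of_nat_diff)
  qed
  have \<rho>0: "0 < \<rho>" and \<rho>1: "\<rho> < 1" unfolding \<rho>_def using pm0 by auto
  have c50: "c5 \<ge> 0" unfolding c5_def d_def using A0 b0 U0 mu0 by simp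
  have K00: "K0 \<ge> 0" unfolding K0_def m'_def by simp
  have main: "\<forall>\<alpha>. 0 < \<alpha> \<and> \<alpha> \<le> exp (-1) \<longrightarrow>
          (\<forall>(M :: 'm measure) W. iid_model M Ps W \<longrightarrow>
             ETI M W eps f Xs p \<beta> \<sigma>2 \<alpha> \<delta> k \<le> ennreal (C * ln (1 / \<alpha>)) \<and>
             ETII M W eps f Xs p \<beta> \<sigma>2 \<alpha> \<delta> k \<le> ennreal (C * ln (1 / \<alpha>)))"
  proof (intro allI impI conjI)
    fix \<alpha> :: real and M :: "'m measure" and W
    assume al: "0 < \<alpha> \<and> \<alpha> \<le> exp (-1)" and iid: "iid_model M Ps W"
    have al0: "0 < \<alpha>" using al by simp
    have al1: "\<alpha> < 1"
    proof -
      have "exp (-1::real) < 1" by simp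
      then show ?thesis using al by linarith
    qed
    have lna: "ln (1 / \<alpha>) \<ge> 1"
    proof -
      have "ln \<alpha> \<le> ln (exp (-1))" using al by (intro ln_mono) auto
      then show ?thesis using al0 by (simp add: ln_div)
    qed
    define T0 where "T0 = 64 * A\<^sup>2 + 2 * A * (b + 2 * ln (1 / \<alpha>)) + 1 + 2 * d + 6 * U / \<mu>"
    define Q where "Q = nat \<lceil>T0\<rceil> + 2"
    have T00: "T0 \<ge> 0" unfolding T0_def d_def using A0 b0 lna U0 mu0 by simp
    have B0eq: "2 * ln (2 * U / (L * (\<alpha> / (real (k - 1) * real (card Xs))))) = b + 2 * ln (1 / \<alpha>)"
    proof -
      have e: "2 * U / (L * (\<alpha> / (real (k - 1) * real (card Xs)))) = (2 * U * real (k - 1) * m / L) * (1 / \<alpha>)"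
        unfolding m_def using L0 al0 by (simp add: field_simps)
      have p1: "2 * U * real (k - 1) * m / L > 0" using U0 k1 m1 L0 by simp
      have p2: "1 / \<alpha> > 0" using al0 by simp
      show ?thesis unfolding e b_def ln_mult_pos[OF p1 p2] by simp
    qed
    have T0ok: "T0 \<ge> 64 * (4 + 64 * \<sigma>M * U / (\<delta>\<^sup>2 * (\<mu> / 2)))\<^sup>2
        + 2 * (4 + 64 * \<sigma>M * U / (\<delta>\<^sup>2 * (\<mu> / 2))) * (2 * ln (2 * U / (L * (\<alpha> / (real (k - 1) * real (card Xs))))))
        + 1 + 2 * real CARD('d) + 6 * U / \<mu>"
      unfolding T0_def B0eq A_def[symmetric] d_def by simp
    have Q2: "Q \<ge> 2" unfolding Q_def by simp
    have QT: "real Q \<ge> T0" unfolding Q_def by linarith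
    note bd = ET_T[OF k2 fin ppos psum PX L0 LU fLU eps delta al0 al1 mu0 mu sig sM pmin pm1 pm0 iid T0ok Q2 QT, where \<beta>=\<beta>]
    have num: "real k * real Q + real k * K0 * \<rho> ^ (Q - 1) / (1 - \<rho>) \<le> C * ln (1 / \<alpha>)"
    proof -
      have "\<rho> ^ (Q - 1) \<le> 1" using \<rho>0 \<rho>1 by (simp add: power_le_one)
      then have "real k * K0 * \<rho> ^ (Q - 1) \<le> real k * K0 * 1" using kpos K00
        by (intro mult_left_mono) auto
      then have "real k * K0 * \<rho> ^ (Q - 1) \<le> real k * K0" by simp
      then have t: "real k * K0 * \<rho> ^ (Q - 1) / (1 - \<rho>) \<le> real k * K0 / (1 - \<rho>)"
        using \<rho>1 by (intro divide_right_mono) auto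
      have "real Q \<le> T0 + 3" unfolding Q_def using T00 by linarith
      also have "T0 + 3 = c5 + 4 * A * ln (1 / \<alpha>)" unfolding T0_def c5_def by (simp add: algebra_simps)
      finally have "real k * real Q \<le> real k * (c5 + 4 * A * ln (1 / \<alpha>))" using kpos by (intro mult_left_mono) auto
      then have t1: "real k * real Q \<le> real k * c5 + 4 * real k * A * ln (1 / \<alpha>)" by (simp add: algebra_simps)
      have t2: "real k * c5 \<le> real k * c5 * ln (1 / \<alpha>)"
      proof -
        have "real k * c5 * 1 \<le> real k * c5 * ln (1 / \<alpha>)" using lna c50 kpos by (intro mult_left_mono) auto
        then show ?thesis by simp
      qed
      have t3: "real k * K0 / (1 - \<rho>) \<le> real k * K0 / (1 - \<rho>) * ln (1 / \<alpha>)"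
      proof -
        have "real k * K0 / (1 - \<rho>) * 1 \<le> real k * K0 / (1 - \<rho>) * ln (1 / \<alpha>)"
          using lna K00 kpos \<rho>1 by (intro mult_left_mono) auto
        then show ?thesis by simp
      qed
      show ?thesis unfolding C_def using t t1 t2 t3 by (simp add: algebra_simps)
    qed
    show "ETI M W eps f Xs p \<beta> \<sigma>2 \<alpha> \<delta> k \<le> ennreal (C * ln (1 / \<alpha>))"
      using bd(1) num unfolding m'_def \<rho>_def K0_def by (meson ennreal_leI order_trans)
    show "ETII M W eps f Xs p \<beta> \<sigma>2 \<alpha> \<delta> k \<le> ennreal (C * ln (1 / \<alpha>))"
      using bd(2) num unfolding m'_def \<rho>_def K0_def by (meson ennreal_leI order_trans)
  qed
  have "0 < exp (-1::real)" by simp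
  then show ?thesis using main by blast
qed




theorem theorem3:
  fixes f :: "real^'d \<Rightarrow> real^'d" and Xs :: "(real^'d) set" and p :: "real^'d \<Rightarrow> real"
    and Ps :: "(real^'d) pmf" and eps \<delta> :: real
  assumes fin: "finite Xs" and ne: "Xs \<noteq> {}"
    and ppos: "\<forall>x\<in>Xs. p x > 0" and psum: "(\<Sum>x\<in>Xs. p x) = 1"
    and Ps_supp: "set_pmf Ps \<subseteq> Xs"
    and eps: "eps > 0" and delta: "\<delta> > 0"
    and A1: "posdef (measure_pmf.expectation Ps (\<lambda>x. outer (f x)))"
    and A2: "\<forall>x\<in>Xs. f x \<noteq> 0"
    and B: "\<exists>L U. 0 < L \<and> L \<le> U \<and> (\<forall>x\<in>Xs. L \<le> (norm (f x))\<^sup>2 \<and> (norm (f x))\<^sup>2 \<le> U)"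
  shows
    \<comment> \<open>as k \<rightarrow> \<infinity>: T_I, T_II = O(k log k), uniformly over the unknown parameters
        (means arbitrary, noise variances bounded by any fixed sigma_max)\<close>
    "(\<forall>\<alpha> \<sigma>max. 0 < \<alpha> \<and> \<alpha> < 1 \<and> 0 < \<sigma>max \<longrightarrow>
       (\<exists>C K. \<forall>k\<ge>K. \<forall>(\<beta> :: nat \<Rightarrow> real^'d) (\<sigma>2 :: nat \<Rightarrow> real).
          (\<forall>a<k. 0 < \<sigma>2 a \<and> \<sigma>2 a \<le> \<sigma>max) \<longrightarrow>
          (\<forall>(M :: 'm measure) W. iid_model M Ps W \<longrightarrow>
             ETI M W eps f Xs p \<beta> \<sigma>2 \<alpha> \<delta> k \<le> ennreal (C * real k * ln (real k)) \<and>
             ETII M W eps f Xs p \<beta> \<sigma>2 \<alpha> \<delta> k \<le> ennreal (C * real k * ln (real k)))))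
     \<and>
    \<comment> \<open>as alpha \<rightarrow> 0 (everything else fixed): T_I, T_II = O(log(1/alpha))\<close>
     (\<forall>k \<ge> 2. \<forall>(\<beta> :: nat \<Rightarrow> real^'d) (\<sigma>2 :: nat \<Rightarrow> real). (\<forall>a<k. 0 < \<sigma>2 a) \<longrightarrow>
       (\<exists>C \<alpha>0. 0 < \<alpha>0 \<and> (\<forall>\<alpha>. 0 < \<alpha> \<and> \<alpha> \<le> \<alpha>0 \<longrightarrow>
          (\<forall>(M :: 'm measure) W. iid_model M Ps W \<longrightarrow>
             ETI M W eps f Xs p \<beta> \<sigma>2 \<alpha> \<delta> k \<le> ennreal (C * ln (1 / \<alpha>)) \<and>
             ETII M W eps f Xs p \<beta> \<sigma>2 \<alpha> \<delta> k \<le> ennreal (C * ln (1 / \<alpha>))))))"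
proof -
  obtain L U where L0: "0 < L" and LU: "L \<le> U" and fLU: "\<forall>x\<in>Xs. L \<le> (norm (f x))\<^sup>2 \<and> (norm (f x))\<^sup>2 \<le> U"
    using B by blast
  obtain \<mu> where mu0: "\<mu> > 0" and mu: "\<forall>v. v \<bullet> (measure_pmf.expectation Ps (\<lambda>x. outer (f x)) *v v) \<ge> \<mu> * (norm v)\<^sup>2"
    using posdef_uniform[OF A1] by blast
  have finP: "finite (set_pmf Ps)" using Ps_supp fin by (rule finite_subset)
  define pm where "pm = Min (pmf Ps ` set_pmf Ps)"
  have Pne: "set_pmf Ps \<noteq> {}" by (simp add: set_pmf_not_empty)
  have pmin: "\<forall>x0\<in>set_pmf Ps. pmf Ps x0 \<ge> pm" unfolding pm_def using finP by auto
  have pm0: "pm > 0"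
  proof -
    have "pm \<in> pmf Ps ` set_pmf Ps" unfolding pm_def using finP Pne by (intro Min_in) auto
    then show ?thesis by (auto simp: set_pmf_eq')
  qed
  have pm1: "pm \<le> 1"
  proof -
    obtain x0 where "x0 \<in> set_pmf Ps" using Pne by blast
    then have "pm \<le> pmf Ps x0" using pmin by blast
    also have "\<dots> \<le> 1" by (rule pmf_le_1)
    finally show ?thesis .
  qed
  show ?thesis
  proof (intro conjI allI impI)
    fix \<alpha> \<sigma>max :: real assume h: "0 < \<alpha> \<and> \<alpha> < 1 \<and> 0 < \<sigma>max"
    show "\<exists>C K. \<forall>k\<ge>K. \<forall>(\<beta> :: nat \<Rightarrow> real^'d) (\<sigma>2 :: nat \<Rightarrow> real).
          (\<forall>a<k. 0 < \<sigma>2 a \<and> \<sigma>2 a \<le> \<sigma>max) \<longrightarrow>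
          (\<forall>(M :: 'm measure) W. iid_model M Ps W \<longrightarrow>
             ETI M W eps f Xs p \<beta> \<sigma>2 \<alpha> \<delta> k \<le> ennreal (C * real k * ln (real k)) \<and>
             ETII M W eps f Xs p \<beta> \<sigma>2 \<alpha> \<delta> k \<le> ennreal (C * real k * ln (real k)))"
      by (rule part1[OF fin ppos psum Ps_supp L0 LU fLU eps delta mu0 mu pmin pm1 pm0]) (use h in auto)
  next
    fix k :: nat and \<beta> :: "nat \<Rightarrow> real^'d" and \<sigma>2 :: "nat \<Rightarrow> real"
    assume k2: "k \<ge> 2" and sig0: "\<forall>a<k. 0 < \<sigma>2 a"
    show "\<exists>C \<alpha>0. 0 < \<alpha>0 \<and> (\<forall>\<alpha>. 0 < \<alpha> \<and> \<alpha> \<le> \<alpha>0 \<longrightarrow>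
          (\<forall>(M :: 'm measure) W. iid_model M Ps W \<longrightarrow>
             ETI M W eps f Xs p \<beta> \<sigma>2 \<alpha> \<delta> k \<le> ennreal (C * ln (1 / \<alpha>)) \<and>
             ETII M W eps f Xs p \<beta> \<sigma>2 \<alpha> \<delta> k \<le> ennreal (C * ln (1 / \<alpha>))))"
      by (rule part2[OF fin ppos psum Ps_supp L0 LU fLU eps delta mu0 mu pmin pm1 pm0 k2 sig0])
  qed
qed


end
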